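(* Let $D\subset\mathbb{R}^2$ be a domain with bounded Lipschitz boundary $\partial D$, let $k>0$, $\Phi_k(\mathbf x,\mathbf y)=\frac{\mathrm i}{4}H^{(1)}_0(k|\mathbf x-\mathbf y|)$, and let $S_k:L^2(\partial D)\to C^2(D)$ be the single layer potential $S_k\varphi(\mathbf x)=\int_{\partial D}\Phi_k(\mathbf x,\mathbf y)\varphi(\mathbf y)\,\mathrm ds(\mathbf y)$, $\mathbf x\in D$. Given $k_0>0$, there is a constant $C>0$ depending only on $\partial D$ such that $$\|S_k\|_{L^2(\partial D)\to L^\infty(D)}\le C\,k^{-1/2}\log^{1/2}\big(1+k\,\mathrm{diam}(\partial D)\big),\qquad k\ge k_0.$$
   Context: $H^{(1)}_0$ is the Hankel function of the first kind of order zero. *)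

theory Defs
  imports "HOL-Analysis.Analysis"
begin

definition bessel_J0 :: "real \<Rightarrow> real" where
  "bessel_J0 x = (\<Sum>m. (-1) ^ m * (x / 2) ^ (2 * m) / (fact m) ^ 2)"

text \<open>Y_0(x) = (2/pi)(ln(x/2) + gamma) J_0(x) + (2/pi) sum_{m>=1} (-1)^(m+1) H_m (x/2)^(2m) / (m!)^2
  (the m = 0 term vanishes since harm 0 = 0).\<close>
definition bessel_Y0 :: "real \<Rightarrow> real" where
  "bessel_Y0 x = 2 / pi * (ln (x / 2) + euler_mascheroni) * bessel_J0 x
     + 2 / pi * (\<Sum>m. (-1) ^ (m + 1) * harm m * (x / 2) ^ (2 * m) / (fact m) ^ 2)"

definition hankel1_0 :: "real \<Rightarrow> complex" where
  "hankel1_0 x = Complex (bessel_J0 x) (bessel_Y0 x)"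

definition Phi :: "real \<Rightarrow> real^2 \<Rightarrow> real^2 \<Rightarrow> complex" where
  "Phi k x y = (\<i> / 4) * hankel1_0 (k * norm (x - y))"

definition lipschitz_boundary :: "(real^2) set \<Rightarrow> bool" where
  "lipschitz_boundary D \<longleftrightarrow>
     (\<forall>p \<in> frontier D. \<exists>Q g L U.
        orthogonal_transformation (Q :: real^2 \<Rightarrow> real^2) \<and>
        (L::real)-lipschitz_on UNIV (g :: real \<Rightarrow> real) \<and> open U \<and> p \<in> U \<and>
        D \<inter> U = {x \<in> U. Q (x - p) $ 2 < g (Q (x - p) $ 1)})"

definition hausdorff1_outer :: "'a::metric_space set \<Rightarrow> ennreal" where
  "hausdorff1_outer A =
     (SUP \<delta>\<in>{0::real<..}. INF C \<in> {C :: nat \<Rightarrow> 'a set.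
        A \<subseteq> (\<Union>i. C i) \<and> (\<forall>i. bounded (C i) \<and> diameter (C i) \<le> \<delta>)}.
        (\<Sum>i. ennreal (diameter (C i))))"

definition bdry_measure :: "(real^2) set \<Rightarrow> (real^2) measure" where
  "bdry_measure D = measure_of (frontier D) (sets (restrict_space borel (frontier D))) hausdorff1_outer"

definition single_layer :: "(real^2) set \<Rightarrow> real \<Rightarrow> (real^2 \<Rightarrow> complex) \<Rightarrow> real^2 \<Rightarrow> complex" where
  "single_layer D k \<phi> x = (LINT y|bdry_measure D. Phi k x y * \<phi> y)"

definition L2_norm_bdry :: "(real^2) set \<Rightarrow> (real^2 \<Rightarrow> complex) \<Rightarrow> real" where
  "L2_norm_bdry D \<phi> = sqrt (LINT y|bdry_measure D. (cmod (\<phi> y))\<^sup>2)"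

definition in_L2_bdry :: "(real^2) set \<Rightarrow> (real^2 \<Rightarrow> complex) \<Rightarrow> bool" where
  "in_L2_bdry D \<phi> \<longleftrightarrow> \<phi> \<in> borel_measurable (bdry_measure D) \<and>
     integrable (bdry_measure D) (\<lambda>y. (cmod (\<phi> y))\<^sup>2)"

end

theory Submission
  imports Defs
begin

definition Jc :: "nat \<Rightarrow> real" where
  "Jc n = (if even n then (-1)^(n div 2) / (4^(n div 2) * (fact (n div 2))^2) else 0)"
definition Hc :: "nat \<Rightarrow> real" where
  "Hc n = (if even n then (-1)^(n div 2 + 1) * harm (n div 2) / (4^(n div 2) * (fact (n div 2))^2) else 0)"

lemma harm_le: "harm n \<le> (real n)"
proof -
  have "harm n = (\<Sum>k=1..n. inverse (real k))" by (simp add: harm_def)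
  also have "\<dots> \<le> (\<Sum>k=1..n. 1)" by (intro sum_mono) (auto simp: inverse_le_1_iff)
  finally show ?thesis by simp
qed

lemma even_reindex_sums:
  fixes c :: "nat \<Rightarrow> real"
  assumes "\<And>n. odd n \<Longrightarrow> c n = 0"
  shows "(\<lambda>m. c (2*m) * x^(2*m)) sums s \<longleftrightarrow> (\<lambda>n. c n * x^n) sums s"
proof -
  have sm: "strict_mono (\<lambda>m::nat. 2*m)" by (auto simp: strict_mono_def)
  show ?thesis
    using sums_mono_reindex[OF sm, of "\<lambda>n. c n * x^n" s] assms
    by (metis (no_types, lifting) evenE mult_eq_0_iff rangeI)
qed

lemma even_conv_radius:
  fixes c :: "nat \<Rightarrow> real"
  assumes "\<And>n. odd n \<Longrightarrow> c n = 0"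
   and "\<And>m. \<bar>c (2*m)\<bar> \<le> inverse (fact m) / 4^m"
  shows "conv_radius c = \<infinity>"
proof -
  have "conv_radius c \<ge> \<infinity>"
  proof (rule conv_radius_geI_ex')
    fix r :: real assume r: "0 < r"
    have "summable (\<lambda>m. c (2*m) * (of_real r)^(2*m))"
    proof (rule summable_comparison_test'[OF summable_exp[of "r^2/4"]])
      fix m :: nat
      have "norm (c (2*m) * r^(2*m)) = \<bar>c (2*m)\<bar> * (r^2)^m"
        using r by (simp add: abs_mult power_mult)
      also have "\<dots> \<le> inverse (fact m) / 4^m * (r^2)^m"
        by (intro mult_right_mono assms(2)) auto
      also have "\<dots> = inverse (fact m) * (r^2/4)^m"
        by (simp add: power_divide)
      finally show "norm (c (2*m) * (of_real r)^(2*m)) \<le> inverse (fact m) * (r^2/4)^m" by simp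
    qed
    then show "summable (\<lambda>n. c n * (of_real r)^n)"
      using even_reindex_sums[of c] assms(1) unfolding summable_def by blast
  qed
  then show ?thesis by (simp add: top.extremum_unique)
qed

lemma Jc_odd: "odd n \<Longrightarrow> Jc n = 0" by (simp add: Jc_def)
lemma Hc_odd: "odd n \<Longrightarrow> Hc n = 0" by (simp add: Hc_def)

lemma fact_sq_ge: "fact m \<le> (fact m :: real)^2"
proof -
  have "1 \<le> (fact m :: real)" by simp
  then show ?thesis by (simp add: power2_eq_square)
qed

lemma Jc_bound: "\<bar>Jc (2*m)\<bar> \<le> inverse (fact m) / 4^m"
proof -
  have "\<bar>Jc (2*m)\<bar> = 1 / (4^m * (fact m)^2)" by (simp add: Jc_def abs_mult)
  also have "\<dots> \<le> 1 / (4^m * fact m)"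
    by (intro divide_left_mono mult_left_mono fact_sq_ge) auto
  finally show ?thesis by (simp add: field_simps)
qed

lemma Hc_bound: "\<bar>Hc (2*m)\<bar> \<le> inverse (fact m) / 4^m"
proof -
  have "\<bar>Hc (2*m)\<bar> = harm m / (4^m * (fact m)^2)" by (simp add: Hc_def abs_mult harm_nonneg)
  also have "\<dots> \<le> real m / (4^m * (fact m)^2)"
    by (intro divide_right_mono harm_le) auto
  also have "\<dots> \<le> fact m / (4^m * (fact m)^2)"
    by (intro divide_right_mono) (auto, metis fact_ge_self of_nat_fact of_nat_mono)
  also have "\<dots> = inverse (fact m) / 4^m" by (simp add: power2_eq_square field_simps)
  finally show ?thesis .
qed

definition "Jf = Abs_fps Jc"
definition "Hf = Abs_fps Hc"

lemma Jf_rad: "fps_conv_radius Jf = \<infinity>"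
  unfolding fps_conv_radius_def Jf_def using even_conv_radius[OF Jc_odd Jc_bound] by simp
lemma Hf_rad: "fps_conv_radius Hf = \<infinity>"
  unfolding fps_conv_radius_def Hf_def using even_conv_radius[OF Hc_odd Hc_bound] by simp

lemma four_pow: "(4::real)^m = (2^m)^2"
  by (simp add: power2_eq_square power_mult_distrib[symmetric])


lemma J0_eval: "bessel_J0 x = eval_fps Jf x"
proof -
  have "(\<lambda>n. Jc n * x^n) sums eval_fps Jf x"
    using sums_eval_fps[of x Jf] Jf_rad by (simp add: Jf_def)
  then have "(\<lambda>m. Jc (2*m) * x^(2*m)) sums eval_fps Jf x"
    using even_reindex_sums[of Jc] Jc_odd by blast
  moreover have "(\<lambda>m. Jc (2*m) * x^(2*m)) = (\<lambda>m. (-1) ^ m * (x / 2) ^ (2 * m) / (fact m) ^ 2)"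
    by (rule ext) (simp add: Jc_def power_mult power_divide field_simps four_pow)
  ultimately show ?thesis unfolding bessel_J0_def by (simp add: sums_iff)
qed

lemma S_eval: "(\<Sum>m. (-1) ^ (m + 1) * harm m * (x / 2) ^ (2 * m) / (fact m) ^ 2) = eval_fps Hf x"
proof -
  have "(\<lambda>n. Hc n * x^n) sums eval_fps Hf x"
    using sums_eval_fps[of x Hf] Hf_rad by (simp add: Hf_def)
  then have "(\<lambda>m. Hc (2*m) * x^(2*m)) sums eval_fps Hf x"
    using even_reindex_sums[of Hc] Hc_odd by blast
  moreover have "(\<lambda>m. Hc (2*m) * x^(2*m)) = (\<lambda>m. (-1) ^ (m + 1) * harm m * (x / 2) ^ (2 * m) / (fact m) ^ 2)"
    by (rule ext) (simp add: Hc_def power_mult power_divide field_simps four_pow)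
  ultimately show ?thesis by (simp add: sums_iff)
qed

lemma aux1: "(a::real) \<noteq> 0 \<Longrightarrow> F \<noteq> 0 \<Longrightarrow> (4 * a^2) * ((-1)^(i+1) / (4^(i+1) * (a*F)^2)) = - ((-1)^i / (4^i * F^2))"
  by (simp add: field_simps power2_eq_square)
lemma aux2: "(a::real) \<noteq> 0 \<Longrightarrow> F \<noteq> 0 \<Longrightarrow> (4 * a^2) * ((-1)^(i+2) * (h + inverse a) / (4^(i+1) * (a * F)^2)) = (-1)^i * h / (4^i * F^2) + (-1)^i / (a * 4^i * F^2)"
  by (simp add: field_simps power2_eq_square)
lemma aux3: "(a::real) \<noteq> 0 \<Longrightarrow> F \<noteq> 0 \<Longrightarrow> - 2 * ((2*a) * ((-1)^(i+1) / (4^(i+1) * (a*F)^2))) = (-1)^i / (a * 4^i * F^2)"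
  by (simp add: field_simps power2_eq_square)

lemma Jc_step: "real ((2*i+2)^2) * Jc (2*i+2) + Jc (2*i) = 0"
proof -
  have f: "(fact (i+1) :: real) = (i+1) * fact i" by (simp add: algebra_simps)
  have "real ((2*i+2)^2) * Jc (2*i+2) = (4 * (real i+1)^2) * ((-1)^(i+1) / (4^(i+1) * ((real i+1) * fact i)^2))"
    by (simp add: Jc_def f power2_eq_square algebra_simps)
  also have "\<dots> = - ((-1)^i / (4^i * (fact i)^2))"
    by (rule aux1) auto
  finally show ?thesis by (simp add: Jc_def)
qed

lemma Hc_step: "real ((2*i+2)^2) * Hc (2*i+2) + Hc (2*i) = - 2 * (real (2*i+2) * Jc (2*i+2))"
proof -
  have f: "(fact (i+1) :: real) = (i+1) * fact i" by (simp add: algebra_simps)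
  have h: "harm (Suc i) = harm i + inverse (real i + 1)" using harm_Suc[of i] by (simp add: add.commute)
  have q: "(2 + 2 * real i)^2 = 4 * (real i + 1)^2" by (simp add: power2_eq_square algebra_simps)
  have f': "(fact (Suc i) :: real) = (real i + 1) * fact i" by (simp add: algebra_simps)
  have "real ((2*i+2)^2) * Hc (2*i+2) = (4 * (real i+1)^2) * ((-1)^(i+2) * (harm i + inverse (real i + 1)) / (4^(i+1) * ((real i+1) * fact i)^2))"
    using q by (simp only: Hc_def) (simp add: f' h add.commute)
  also have "\<dots> = (-1)^i * harm i / (4^i * (fact i)^2) + (-1)^i / ((real i + 1) * 4^i * (fact i)^2)"
    by (rule aux2) auto
  finally have 1: "real ((2*i+2)^2) * Hc (2*i+2) = (-1)^i * harm i / (4^i * (fact i)^2) + (-1)^i / ((real i + 1) * 4^i * (fact i)^2)" .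
  have 2: "Hc (2*i) = - ((-1)^i * harm i / (4^i * (fact i)^2))" by (simp add: Hc_def)
  have 3: "- 2 * (real (2*i+2) * Jc (2*i+2)) = (-1)^i / ((real i + 1) * 4^i * (fact i)^2)"
    unfolding Jc_def using aux3[of "real i + 1" "fact i" i] by (simp add: f algebra_simps)
  show ?thesis using 1 2 3 by simp
qed

lemma Jf_ode: "fps_X * fps_deriv (fps_deriv Jf) + fps_deriv Jf + fps_X * Jf = 0"
proof (rule fps_ext)
  fix n
  show "fps_nth (fps_X * fps_deriv (fps_deriv Jf) + fps_deriv Jf + fps_X * Jf) n = fps_nth 0 n"
  proof (cases n)
    case 0 then show ?thesis by (simp add: fps_X_mult_nth Jf_def Jc_def)
  next
    case (Suc j)
    have e: "fps_nth (fps_X * fps_deriv (fps_deriv Jf) + fps_deriv Jf + fps_X * Jf) n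
        = real ((j+2)^2) * Jc (j+2) + Jc j"
      using Suc by (simp add: fps_X_mult_nth Jf_def algebra_simps power2_eq_square)
    show ?thesis
    proof (cases "even j")
      case True then obtain i where "j = 2*i" by blast
      then show ?thesis using e Jc_step[of i] by (simp add: add.commute)
    next
      case False then show ?thesis using e by (simp add: Jc_def)
    qed
  qed
qed

lemma Hf_ode: "fps_X * fps_deriv (fps_deriv Hf) + fps_deriv Hf + fps_X * Hf = fps_const (-2) * fps_deriv Jf"
proof (rule fps_ext)
  fix n
  show "fps_nth (fps_X * fps_deriv (fps_deriv Hf) + fps_deriv Hf + fps_X * Hf) n = fps_nth (fps_const (-2) * fps_deriv Jf) n"
  proof (cases n)
    case 0 then show ?thesis by (simp add: fps_X_mult_nth Hf_def Hc_def Jf_def Jc_def)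
  next
    case (Suc j)
    have e: "fps_nth (fps_X * fps_deriv (fps_deriv Hf) + fps_deriv Hf + fps_X * Hf) n
        = real ((j+2)^2) * Hc (j+2) + Hc j"
      using Suc by (simp add: fps_X_mult_nth Hf_def algebra_simps power2_eq_square)
    have e2: "fps_nth (fps_const (-2) * fps_deriv Jf) n = - 2 * (real (j+2) * Jc (j+2))"
      using Suc by (simp add: Jf_def algebra_simps)
    show ?thesis
    proof (cases "even j")
      case True then obtain i where "j = 2*i" by blast
      then show ?thesis using e e2 Hc_step[of i] by (simp add: add.commute)
    next
      case False then show ?thesis using e e2 by (simp add: Hc_def Jc_def)
    qed
  qed
qed

lemma energy_alg: "(t::real) > 0 \<Longrightarrow> (8*((a+2*t*b)*((3*b + (-(b/t) - a)*(2*t))*t)) - (a+2*t*b)*(a+2*t*b)*4)/(16*(t*t)) + (a*a + 2*(a*b)*t) + (8*(a*(b*t)) - a*a*4)/(16*(t*t)) = -(a*a/(2*(t*t)))"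
proof -
  assume t: "t > 0"
  have e: "(-(b/t) - a)*(2*t) = -2*b - 2*a*t" using t by (simp add: field_simps)
  show ?thesis unfolding e using t by (simp add: field_simps)
qed

lemma energy_decay:
  fixes y y1 :: "real \<Rightarrow> real"
  assumes d1: "\<And>t. t > 0 \<Longrightarrow> (y has_real_derivative y1 t) (at t)"
    and d2: "\<And>t. t > 0 \<Longrightarrow> (y1 has_real_derivative (- y1 t / t - y t)) (at t)"
  shows "\<exists>B. \<forall>t\<ge>1. t * (y t)^2 \<le> B"
proof -
  define E where "E t = (y t + 2*t*y1 t)^2/(4*t) + t*(y t)^2 + (y t)^2/(4*t)" for t
  have dE: "(E has_real_derivative (-((y t)^2) / (2 * t^2))) (at t)" if t: "t > 0" for t
  proof -
    show ?thesis
      unfolding E_def using t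
      by (auto intro!: derivative_eq_intros d1 d2 simp: power2_eq_square) (rule energy_alg)
  qed
  have "t * (y t)^2 \<le> E 1" if t: "t \<ge> 1" for t
  proof -
    have "E t \<le> E 1"
    proof (rule DERIV_nonpos_imp_nonincreasing[OF t])
      fix x :: real assume x: "1 \<le> x" "x \<le> t"
      have "-((y x)^2) / (2 * x^2) \<le> 0" by (simp add: divide_nonneg_nonneg)
      then show "\<exists>d. DERIV E x :> d \<and> d \<le> 0" using dE[of x] x by (intro exI[of _ "-((y x)^2) / (2 * x^2)"]) auto
    qed
    moreover have "t * (y t)^2 \<le> E t" using t unfolding E_def by auto
    ultimately show ?thesis by linarith
  qed
  then show ?thesis by blast
qed

lemma rad_deriv_inf: "fps_conv_radius (f::real fps) = \<infinity> \<Longrightarrow> fps_conv_radius (fps_deriv f) = \<infinity>"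
  using fps_conv_radius_deriv[of f] by (simp add: top.extremum_unique)
lemma rad_add_inf: "fps_conv_radius (f::real fps) = \<infinity> \<Longrightarrow> fps_conv_radius g = \<infinity> \<Longrightarrow> fps_conv_radius (f + g) = \<infinity>"
  using fps_conv_radius_add[of f g] by (simp add: top.extremum_unique)
lemma rad_mult_inf: "fps_conv_radius (f::real fps) = \<infinity> \<Longrightarrow> fps_conv_radius g = \<infinity> \<Longrightarrow> fps_conv_radius (f * g) = \<infinity>"
  using fps_conv_radius_mult[of f g] by (simp add: top.extremum_unique)

lemma eval_ode:
  fixes f g :: "real fps"
  assumes rf: "fps_conv_radius f = \<infinity>" and rg: "fps_conv_radius g = \<infinity>"
    and ode: "fps_X * fps_deriv (fps_deriv f) + fps_deriv f + fps_X * f = g"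
  shows "x * eval_fps (fps_deriv (fps_deriv f)) x + eval_fps (fps_deriv f) x + x * eval_fps f x = eval_fps g x"
proof -
  have r1: "fps_conv_radius (fps_deriv f) = \<infinity>" using rad_deriv_inf[OF rf] .
  have r2: "fps_conv_radius (fps_deriv (fps_deriv f)) = \<infinity>" using rad_deriv_inf[OF r1] .
  have "eval_fps g x = eval_fps (fps_X * fps_deriv (fps_deriv f) + fps_deriv f + fps_X * f) x" using ode by simp
  also have "\<dots> = eval_fps (fps_X * fps_deriv (fps_deriv f)) x + eval_fps (fps_deriv f) x + eval_fps (fps_X * f) x"
    by (simp add: eval_fps_add rad_add_inf rad_mult_inf r1 r2 rf)
  also have "\<dots> = x * eval_fps (fps_deriv (fps_deriv f)) x + eval_fps (fps_deriv f) x + x * eval_fps f x"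
    by (simp add: eval_fps_mult r2 rf)
  finally show ?thesis by simp
qed

lemma Jf_deriv_rad: "fps_conv_radius (fps_deriv Jf) = \<infinity>" by (rule rad_deriv_inf[OF Jf_rad])
lemma Hf_deriv_rad: "fps_conv_radius (fps_deriv Hf) = \<infinity>" by (rule rad_deriv_inf[OF Hf_rad])

lemma eval_deriv_at: "fps_conv_radius (f::real fps) = \<infinity> \<Longrightarrow> (eval_fps f has_real_derivative eval_fps (fps_deriv f) x) (at x)"
  by (rule has_field_derivative_eval_fps) simp

lemma J_decay: "\<exists>B. \<forall>t\<ge>1. t * (bessel_J0 t)^2 \<le> B"
proof -
  have J: "bessel_J0 = eval_fps Jf" using J0_eval by auto
  have ode: "x * eval_fps (fps_deriv (fps_deriv Jf)) x + eval_fps (fps_deriv Jf) x + x * eval_fps Jf x = 0" for x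
    using eval_ode[OF Jf_rad _ Jf_ode] by simp
  show ?thesis unfolding J
  proof (rule energy_decay[of "eval_fps Jf" "eval_fps (fps_deriv Jf)"])
    fix t :: real assume t: "t > 0"
    show "(eval_fps Jf has_real_derivative eval_fps (fps_deriv Jf) t) (at t)"
      by (rule eval_deriv_at[OF Jf_rad])
    have "eval_fps (fps_deriv (fps_deriv Jf)) t = - eval_fps (fps_deriv Jf) t / t - eval_fps Jf t"
      using ode[of t] t by (simp add: field_simps)
    then show "(eval_fps (fps_deriv Jf) has_real_derivative - eval_fps (fps_deriv Jf) t / t - eval_fps Jf t) (at t)"
      using eval_deriv_at[OF Jf_deriv_rad, of t] by simp
  qed
qed

lemma Y_decay: "\<exists>B. \<forall>t\<ge>1. t * (bessel_Y0 t)^2 \<le> B"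
proof -
  define a where "a = 2 / pi"
  define J where "J = eval_fps Jf"
  define J1 where "J1 = eval_fps (fps_deriv Jf)"
  define J2 where "J2 = eval_fps (fps_deriv (fps_deriv Jf))"
  define S where "S = eval_fps Hf"
  define S1 where "S1 = eval_fps (fps_deriv Hf)"
  define S2 where "S2 = eval_fps (fps_deriv (fps_deriv Hf))"
  have Y: "bessel_Y0 = (\<lambda>t. a * (ln (t/2) + euler_mascheroni) * J t + a * S t)"
    by (rule ext) (simp only: bessel_Y0_def a_def J_def S_def J0_eval S_eval)
  have odeJ: "J2 t = - J1 t / t - J t" if "t > 0" for t
    using eval_ode[OF Jf_rad _ Jf_ode, of t] that unfolding J_def J1_def J2_def by (simp add: field_simps)
  have rg: "fps_conv_radius (fps_const (-2) * fps_deriv Jf) = \<infinity>"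
    by (rule rad_mult_inf) (simp_all add: Jf_deriv_rad)
  have odeS: "S2 t = (-2 * J1 t - S1 t) / t - S t" if "t > 0" for t
  proof -
    have "t * S2 t + S1 t + t * S t = eval_fps (fps_const (-2) * fps_deriv Jf) t"
      using eval_ode[OF Hf_rad rg Hf_ode, of t] unfolding S_def S1_def S2_def by simp
    also have "\<dots> = -2 * J1 t" unfolding J1_def by (simp add: eval_fps_mult Jf_deriv_rad)
    finally show ?thesis using that by (simp add: field_simps)
  qed
  have dJ: "(J has_real_derivative J1 t) (at t)" for t unfolding J_def J1_def by (rule eval_deriv_at[OF Jf_rad])
  have dJ1: "(J1 has_real_derivative J2 t) (at t)" for t unfolding J2_def J1_def by (rule eval_deriv_at[OF Jf_deriv_rad])
  have dS: "(S has_real_derivative S1 t) (at t)" for t unfolding S_def S1_def by (rule eval_deriv_at[OF Hf_rad])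
  have dS1: "(S1 has_real_derivative S2 t) (at t)" for t unfolding S2_def S1_def by (rule eval_deriv_at[OF Hf_deriv_rad])
  define y1 where "y1 t = a * (J t / t + (ln (t/2) + euler_mascheroni) * J1 t) + a * S1 t" for t
  show ?thesis unfolding Y
  proof (rule energy_decay[of _ y1])
    fix t :: real assume t: "t > 0"
    show "((\<lambda>t. a * (ln (t/2) + euler_mascheroni) * J t + a * S t) has_real_derivative y1 t) (at t)"
      unfolding y1_def using t
      by (auto intro!: derivative_eq_intros dJ dS simp: field_simps)
    have "(y1 has_real_derivative
       a * ((J1 t * t - J t) / t^2 + ((1/t) * J1 t + (ln (t/2) + euler_mascheroni) * J2 t)) + a * S2 t) (at t)"
      unfolding y1_def using t
      by (auto intro!: derivative_eq_intros dJ dS dJ1 dS1 simp: field_simps power2_eq_square)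
    moreover have "a * ((J1 t * t - J t) / t^2 + ((1/t) * J1 t + (ln (t/2) + euler_mascheroni) * J2 t)) + a * S2 t
       = - y1 t / t - (a * (ln (t/2) + euler_mascheroni) * J t + a * S t)"
      unfolding y1_def odeJ[OF t] odeS[OF t] using t by (simp add: field_simps power2_eq_square)
    ultimately show "(y1 has_real_derivative - y1 t / t - (a * (ln (t/2) + euler_mascheroni) * J t + a * S t)) (at t)"
      by simp
  qed
qed

lemma H_decay: "\<exists>B. \<forall>t\<ge>1. (cmod (hankel1_0 t))^2 \<le> B / t"
proof -
  obtain B1 where B1: "\<forall>t\<ge>1. t * (bessel_J0 t)^2 \<le> B1" using J_decay by blast
  obtain B2 where B2: "\<forall>t\<ge>1. t * (bessel_Y0 t)^2 \<le> B2" using Y_decay by blast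
  have "(cmod (hankel1_0 t))^2 \<le> (B1 + B2) / t" if t: "t \<ge> 1" for t
  proof -
    have "(cmod (hankel1_0 t))^2 = (bessel_J0 t)^2 + (bessel_Y0 t)^2"
      by (simp add: hankel1_0_def cmod_def)
    also have "\<dots> \<le> (B1 + B2) / t" using B1[rule_format, OF t] B2[rule_format, OF t] t by (simp add: field_simps)
    finally show ?thesis .
  qed
  then show ?thesis by blast
qed

lemma div_le_self: "0 \<le> (x::real) \<Longrightarrow> 1 \<le> y \<Longrightarrow> x / y \<le> x"
  using divide_left_mono[of 1 y x] by simp

lemma J_small: "0 < (t::real) \<Longrightarrow> t \<le> 1 \<Longrightarrow> \<bar>bessel_J0 t\<bar> \<le> 4/3"
proof -
  assume t: "0 < t" "t \<le> 1"
  have b: "norm ((-1) ^ m * (t / 2) ^ (2 * m) / (fact m) ^ 2) \<le> (1/4)^m" for m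
  proof -
    have "norm ((-1) ^ m * (t / 2) ^ (2 * m) / (fact m) ^ 2) = (t^2/4)^m / (fact m)^2"
      by (simp add: abs_mult power_mult power_divide power2_eq_square)
    also have "\<dots> \<le> (t^2/4)^m" by (rule div_le_self) (use t in auto)
    also have "\<dots> \<le> (1/4)^m" using t by (intro power_mono) (auto simp: power_le_one)
    finally show ?thesis .
  qed
  have "norm (bessel_J0 t) \<le> (\<Sum>m. (1/4::real)^m)"
    unfolding bessel_J0_def by (rule norm_suminf_le[OF b]) (simp add: summable_geometric)
  also have "\<dots> = 4/3" by (simp add: suminf_geometric)
  finally show ?thesis by simp
qed

lemma S_small: "0 < (t::real) \<Longrightarrow> t \<le> 1 \<Longrightarrow> \<bar>\<Sum>m. (-1) ^ (m + 1) * harm m * (t / 2) ^ (2 * m) / (fact m) ^ 2\<bar> \<le> 2"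
proof -
  assume t: "0 < t" "t \<le> 1"
  have b: "norm ((-1) ^ (m + 1) * harm m * (t / 2) ^ (2 * m) / (fact m) ^ 2) \<le> (1/2)^m" for m
  proof -
    have "norm ((-1) ^ (m+1) * harm m * (t / 2) ^ (2 * m) / (fact m) ^ 2) = harm m * (t^2/4)^m / (fact m)^2"
      by (simp add: abs_mult power_mult power_divide power2_eq_square harm_nonneg)
    also have "\<dots> \<le> harm m * (t^2/4)^m" by (rule div_le_self) (use t in \<open>auto simp: harm_nonneg\<close>)
    also have "\<dots> \<le> real m * (1/4)^m" using t
      by (intro mult_mono harm_le power_mono) (auto simp: power_le_one)
    also have "\<dots> \<le> 2^m * (1/4)^m"
    proof (intro mult_right_mono)
      have "m < 2^m" by (rule less_exp)
      then have "real m \<le> real (2^m)" by linarith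
      then show "real m \<le> 2^m" by simp
    qed simp
    also have "\<dots> = (1/2)^m" by (simp add: four_pow power2_eq_square power_divide)
    finally show ?thesis .
  qed
  have "norm (\<Sum>m. (-1) ^ (m + 1) * harm m * (t / 2) ^ (2 * m) / (fact m) ^ 2) \<le> (\<Sum>m. (1/2::real)^m)"
    by (rule norm_suminf_le[OF b]) (simp add: summable_geometric)
  also have "\<dots> = 2" by (simp add: suminf_geometric)
  finally show ?thesis by simp
qed

lemma ln_sq_bound: "0 < (t::real) \<Longrightarrow> t \<le> 1 \<Longrightarrow> (ln t)^2 \<le> 16 / sqrt t"
proof -
  assume t: "0 < t" "t \<le> 1"
  define s where "s = t powr (-1/4)"
  have s: "s > 0" using t by (simp add: s_def)
  have "ln s = - ln t / 4" using t by (simp add: s_def ln_powr)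
  then have "- ln t = 4 * ln s" by simp
  also have "\<dots> \<le> 4 * s" using ln_less_self[OF s] by simp
  finally have l: "- ln t \<le> 4 * s" .
  have l0: "0 \<le> - ln t" using t by simp
  have "(ln t)^2 = (- ln t)^2" by simp
  also have "\<dots> \<le> (4 * s)^2" by (rule power_mono[OF l l0])
  also have "\<dots> = 16 * s^2" by (simp add: power2_eq_square)
  also have "s^2 = 1 / sqrt t" using t
    by (simp add: s_def sqrt_def powr_powr[symmetric] power2_eq_square flip: powr_add) (simp add: powr_minus_divide root_powr_inverse)
  finally show ?thesis by simp
qed

lemma Y_small:
  fixes t :: real
  assumes t: "0 < t" "t \<le> 1"
  shows "\<bar>bessel_Y0 t\<bar> \<le> 2/pi * (ln 2 + \<bar>euler_mascheroni\<bar> + (- ln t)) * (4/3) + 2/pi * 2"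
proof -
  define a where "a = 2/(pi::real)"
  have a: "a > 0" by (simp add: a_def)
  have l: "\<bar>ln (t/2) + euler_mascheroni\<bar> \<le> ln 2 + \<bar>euler_mascheroni\<bar> + (- ln t)"
  proof -
    have "ln (t/2) = ln t - ln 2" using t by (simp add: ln_div)
    moreover have "ln t \<le> 0" using t by simp
    moreover have "ln 2 \<ge> (0::real)" by simp
    ultimately show ?thesis by linarith
  qed
  have "\<bar>bessel_Y0 t\<bar> \<le> a * \<bar>ln (t/2) + euler_mascheroni\<bar> * \<bar>bessel_J0 t\<bar> + a * \<bar>\<Sum>m. (-1) ^ (m + 1) * harm m * (t / 2) ^ (2 * m) / (fact m) ^ 2\<bar>"
  proof -
    have "bessel_Y0 t = a * (ln (t/2) + euler_mascheroni) * bessel_J0 t + a * (\<Sum>m. (-1) ^ (m + 1) * harm m * (t / 2) ^ (2 * m) / (fact m) ^ 2)"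
      by (simp add: bessel_Y0_def a_def)
    then have "\<bar>bessel_Y0 t\<bar> \<le> \<bar>a * (ln (t/2) + euler_mascheroni) * bessel_J0 t\<bar> + \<bar>a * (\<Sum>m. (-1) ^ (m + 1) * harm m * (t / 2) ^ (2 * m) / (fact m) ^ 2)\<bar>"
      by (simp only: abs_triangle_ineq)
    then show ?thesis using a by (simp add: abs_mult)
  qed
  also have "\<dots> \<le> a * (ln 2 + \<bar>euler_mascheroni\<bar> + (- ln t)) * (4/3) + a * 2"
    using a l J_small[OF t] S_small[OF t]
    by (intro add_mono mult_mono mult_left_mono) auto
  finally show ?thesis unfolding a_def .
qed

lemma H_small: "\<exists>A. \<forall>t. 0 < t \<and> t \<le> 1 \<longrightarrow> (cmod (hankel1_0 t))^2 \<le> A / sqrt t"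
proof -
  define P :: real where "P = 2/pi*(4/3)*(ln 2 + \<bar>euler_mascheroni\<bar>) + 2*(2/pi)"
  define Q :: real where "Q = 2/pi*(4/3)"
  have P: "P \<ge> 0" unfolding P_def by (auto intro!: add_nonneg_nonneg mult_nonneg_nonneg)
  have Q: "Q \<ge> 0" unfolding Q_def by auto
  have "(cmod (hankel1_0 t))^2 \<le> (2 + 2*P^2 + 32*Q^2) / sqrt t" if t: "0 < t" "t \<le> 1" for t
  proof -
    have st: "0 < sqrt t" "sqrt t \<le> 1" using t by auto
    have is1: "1 \<le> 1 / sqrt t" using st by simp
    have "(cmod (hankel1_0 t))^2 = (bessel_J0 t)^2 + (bessel_Y0 t)^2"
      by (simp add: hankel1_0_def cmod_def)
    also have "(bessel_J0 t)^2 \<le> 2 / sqrt t"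
    proof -
      have "(bessel_J0 t)^2 \<le> (4/3)^2"
        using J_small[OF t] abs_le_square_iff[of "bessel_J0 t" "4/3"] by simp
      also have "\<dots> \<le> 2" by (simp add: power2_eq_square)
      also have "\<dots> \<le> 2 / sqrt t" using is1 by (simp add: field_simps)
      finally show ?thesis .
    qed
    also have "(bessel_Y0 t)^2 \<le> (2*P^2 + 32*Q^2) / sqrt t"
    proof -
      have "2/pi * (ln 2 + \<bar>euler_mascheroni\<bar> + (- ln t)) * (4/3) + 2/pi * 2 = P + Q * (- ln t)"
        unfolding P_def Q_def by (simp add: field_simps)
      then have y: "\<bar>bessel_Y0 t\<bar> \<le> P + Q * (- ln t)" using Y_small[OF t] by simp
      have lt: "0 \<le> - ln t" using t by simp
      have "(bessel_Y0 t)^2 \<le> (P + Q * (- ln t))^2"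
        using y abs_le_square_iff[of "bessel_Y0 t" "P + Q * (- ln t)"] P Q lt by simp
      also have "\<dots> \<le> 2*P^2 + 2*Q^2*(ln t)^2"
        using sum_squares_ge_zero[of "P - Q*(-ln t)" 0] by (simp add: power2_eq_square algebra_simps)
      also have "\<dots> \<le> 2*P^2 / sqrt t + 2*Q^2*(16 / sqrt t)"
      proof (rule add_mono)
        have "2*P^2 * 1 \<le> 2*P^2 * (1 / sqrt t)" by (rule mult_left_mono[OF is1]) simp
        then show "2*P^2 \<le> 2*P^2 / sqrt t" by simp
        show "2*Q^2*(ln t)^2 \<le> 2*Q^2*(16 / sqrt t)" by (rule mult_left_mono[OF ln_sq_bound[OF t]]) simp
      qed
      finally show ?thesis by (simp add: add_divide_distrib)
    qed
    finally show ?thesis by (simp add: add_divide_distrib)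
  qed
  then show ?thesis by blast
qed

lemma H_le_cover:
  assumes "\<And>\<delta>. \<delta> > 0 \<Longrightarrow> \<exists>C. A \<subseteq> (\<Union>i. C i) \<and> (\<forall>i. bounded (C i) \<and> diameter (C i) \<le> \<delta>) \<and> (\<Sum>i. ennreal (diameter (C i))) \<le> K"
  shows "hausdorff1_outer A \<le> K"
  unfolding hausdorff1_outer_def
proof (rule SUP_least)
  fix \<delta> :: real assume "\<delta> \<in> {0<..}"
  then obtain C where C: "A \<subseteq> (\<Union>i. C i)" "\<forall>i. bounded (C i) \<and> diameter (C i) \<le> \<delta>" "(\<Sum>i. ennreal (diameter (C i))) \<le> K"
    using assms by force
  show "(INF C \<in> {C. A \<subseteq> (\<Union>i. C i) \<and> (\<forall>i. bounded (C i) \<and> diameter (C i) \<le> \<delta>)}. \<Sum>i. ennreal (diameter (C i))) \<le> K"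
    by (rule INF_lower2[of C]) (use C in auto)
qed

lemma graph_pair:
  fixes Q :: "real^2 \<Rightarrow> real^2" and g :: "real \<Rightarrow> real"
  assumes Q: "orthogonal_transformation Q" and g: "L-lipschitz_on UNIV g"
    and z: "Q (z - p) $ 2 = g (Q (z - p) $ 1)" and w: "Q (w - p) $ 2 = g (Q (w - p) $ 1)"
  shows "norm (z - w) \<le> (1 + L) * \<bar>Q (z - p) $ 1 - Q (w - p) $ 1\<bar>"
proof -
  have lin: "linear Q" using Q by (rule orthogonal_transformation_linear)
  have "Q (z - p) - Q (w - p) = Q (z - w)" using linear_diff[OF lin, of "z - p" "w - p"] by simp
  then have "norm (z - w) = norm (Q (z - p) - Q (w - p))" using orthogonal_transformation_norm[OF Q] by simp
  also have "\<dots> \<le> \<bar>(Q (z - p) - Q (w - p)) $ 1\<bar> + \<bar>(Q (z - p) - Q (w - p)) $ 2\<bar>"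
    using norm_le_l1_cart[of "Q (z - p) - Q (w - p)"] by (simp add: sum_2)
  also have "\<bar>(Q (z - p) - Q (w - p)) $ 2\<bar> \<le> L * \<bar>Q (z - p) $ 1 - Q (w - p) $ 1\<bar>"
    using lipschitz_onD[OF g, of "Q (z - p) $ 1" "Q (w - p) $ 1"] z w by (simp add: dist_real_def)
  finally show ?thesis by (simp add: algebra_simps)
qed

lemma index_exists:
  fixes s :: real and N :: nat
  assumes "0 \<le> s" "s \<le> N" "N \<ge> 1"
  shows "\<exists>i<N. real i \<le> s \<and> s \<le> real i + 1"
proof (cases "s < N - 1")
  case True
  define i where "i = nat \<lfloor>s\<rfloor>"
  have "real i \<le> s" "s \<le> real i + 1" using assms unfolding i_def by linarith+
  moreover have "i < N" using True assms unfolding i_def by linarith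
  ultimately show ?thesis by blast
next
  case False
  then show ?thesis using assms by (intro exI[of _ "N - 1"]) (auto simp: of_nat_diff)
qed

lemma graph_H:
  fixes Q :: "real^2 \<Rightarrow> real^2" and g :: "real \<Rightarrow> real"
  assumes Q: "orthogonal_transformation Q" and g: "L-lipschitz_on UNIV g" and r: "r > 0"
    and A: "A \<subseteq> {z. \<bar>Q (z - p) $ 1 - a\<bar> \<le> r \<and> Q (z - p) $ 2 = g (Q (z - p) $ 1)}"
  shows "hausdorff1_outer A \<le> ennreal (2 * r * (1 + L))"
proof (rule H_le_cover)
  fix \<delta> :: real assume d: "\<delta> > 0"
  define G where "G = {z. \<bar>Q (z - p) $ 1 - a\<bar> \<le> r \<and> Q (z - p) $ 2 = g (Q (z - p) $ 1)}"
  have L0: "0 \<le> L" using g by (rule lipschitz_on_nonneg)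
  define N :: nat where "N = nat \<lceil>2*r*(1+L)/\<delta>\<rceil> + 1"
  have N1: "N \<ge> 1" by (simp add: N_def)
  have N2: "real N \<ge> 2*r*(1+L)/\<delta>" unfolding N_def by linarith
  define h where "h = 2*r / N"
  have h: "h > 0" using r N1 by (simp add: h_def)
  define \<pi> where "\<pi> z = Q (z - p) $ 1" for z
  define C where "C i = (if i < N then {z\<in>G. a - r + i*h \<le> \<pi> z \<and> \<pi> z \<le> a - r + (i+1)*h} else {})" for i
  have pw: "norm (z - w) \<le> (1+L)*h" if "z \<in> C i" "w \<in> C i" for z w i
  proof -
    have "norm (z - w) \<le> (1 + L) * \<bar>\<pi> z - \<pi> w\<bar>"
      using graph_pair[OF Q g] that unfolding C_def G_def \<pi>_def by (auto split: if_splits)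
    also have "\<bar>\<pi> z - \<pi> w\<bar> \<le> h" using that unfolding C_def by (auto split: if_splits simp: algebra_simps)
    then have "(1 + L) * \<bar>\<pi> z - \<pi> w\<bar> \<le> (1+L)*h" using L0 by (intro mult_left_mono) auto
    finally show ?thesis .
  qed
  have diam: "diameter (C i) \<le> (1+L)*h" for i
    by (rule diameter_le) (use pw h L0 in auto)
  have bd: "bounded (C i)" for i
  proof (cases "C i = {}")
    case False
    then obtain z0 where z0: "z0 \<in> C i" by blast
    have "C i \<subseteq> cball z0 ((1+L)*h)" using pw[OF z0] by (auto simp: dist_norm)
    then show ?thesis using bounded_subset bounded_cball by blast
  qed simp
  have hd: "(1+L)*h \<le> \<delta>"
  proof -
    have "(1+L)*h = 2*r*(1+L) / N" by (simp add: h_def)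
    also have "\<dots> \<le> \<delta>" using N2 N1 d by (simp add: divide_le_eq mult.commute pos_divide_le_eq)
    finally show ?thesis .
  qed
  have cov: "A \<subseteq> (\<Union>i. C i)"
  proof
    fix z assume "z \<in> A"
    then have zG: "z \<in> G" using A unfolding G_def by blast
    define s where "s = (\<pi> z - (a - r)) / h"
    have "0 \<le> s" using zG h unfolding s_def G_def \<pi>_def by auto
    moreover have "s \<le> N"
    proof -
      have "\<pi> z - (a - r) \<le> 2*r" using zG unfolding G_def \<pi>_def by auto
      also have "\<dots> = N * h" using N1 by (simp add: h_def)
      finally show ?thesis using h unfolding s_def by (simp add: divide_le_eq)
    qed
    ultimately obtain i where i: "i < N" "real i \<le> s" "s \<le> real i + 1" using index_exists N1 by blast
    have "a - r + i*h \<le> \<pi> z" using i(2) h unfolding s_def by (simp add: le_divide_eq algebra_simps)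
    moreover have "\<pi> z \<le> a - r + (i+1)*h" using i(3) h unfolding s_def by (simp add: divide_le_eq algebra_simps)
    ultimately have "z \<in> C i" using i(1) zG unfolding C_def by (auto simp: add.commute)
    then show "z \<in> (\<Union>i. C i)" by blast
  qed
  have "(\<Sum>i. ennreal (diameter (C i))) = (\<Sum>i<N. ennreal (diameter (C i)))"
    by (rule suminf_finite) (auto simp: C_def)
  also have "\<dots> = ennreal (\<Sum>i<N. diameter (C i))"
    by (rule sum_ennreal) (use bd diameter_ge_0 in auto)
  also have "\<dots> \<le> ennreal (2 * r * (1 + L))"
  proof (rule ennreal_leI)
    have "(\<Sum>i<N. diameter (C i)) \<le> (\<Sum>i<N. (1+L)*h)" by (rule sum_mono) (rule diam)
    also have "\<dots> = 2 * r * (1 + L)" using N1 by (simp add: h_def)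
    finally show "(\<Sum>i<N. diameter (C i)) \<le> 2 * r * (1 + L)" .
  qed
  finally show "\<exists>C. A \<subseteq> (\<Union>i. C i) \<and> (\<forall>i. bounded (C i) \<and> diameter (C i) \<le> \<delta>) \<and> (\<Sum>i. ennreal (diameter (C i))) \<le> ennreal (2 * r * (1 + L))"
    using cov bd diam hd by (intro exI[of _ C]) (auto intro: order.trans)
qed

lemma M_le_H: "emeasure (bdry_measure D) A \<le> hausdorff1_outer A"
  unfolding bdry_measure_def emeasure_measure_of_conv by auto

lemma space_M: "space (bdry_measure D) = frontier D"
  unfolding bdry_measure_def by (simp add: space_measure_of_conv)

lemma sets_M: "sets (restrict_space borel (frontier D)) \<subseteq> sets (bdry_measure D)"
proof -
  have "sets (restrict_space borel (frontier D)) \<subseteq> Pow (frontier D)"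
    using sets.sets_into_space[of _ "restrict_space borel (frontier D)"] by (auto simp: space_restrict_space)
  then show ?thesis unfolding bdry_measure_def
    by (simp add: sets_measure_of_conv sigma_sets_superset_generator)
qed

lemma in_sets_M: "B \<in> sets borel \<Longrightarrow> frontier D \<inter> B \<in> sets (bdry_measure D)"
proof -
  assume B: "B \<in> sets borel"
  have "frontier D \<inter> B \<in> sets (restrict_space borel (frontier D))"
    using B by (subst sets_restrict_space_iff) (auto intro: borel_closed)
  then show ?thesis using sets_M by blast
qed

lemma frontier_graph:
  fixes D :: "(real^2) set" and Q :: "real^2 \<Rightarrow> real^2" and g :: "real \<Rightarrow> real"
  assumes D: "open D" and Q: "orthogonal_transformation Q" and g: "L-lipschitz_on UNIV g"
    and U: "open U" and DU: "D \<inter> U = {x \<in> U. Q (x - p) $ 2 < g (Q (x - p) $ 1)}"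
    and z: "z \<in> frontier D" "z \<in> U"
  shows "Q (z - p) $ 2 = g (Q (z - p) $ 1)"
proof -
  have lin: "bounded_linear Q" using orthogonal_transformation_linear[OF Q] linear_conv_bounded_linear by blast
  have c1: "continuous_on UNIV (\<lambda>x. Q (x - p) $ 1)" and c2: "continuous_on UNIV (\<lambda>x. Q (x - p) $ 2)"
  proof -
    have cQ: "continuous_on UNIV (\<lambda>x. Q (x - p))"
      by (rule continuous_on_compose2[OF linear_continuous_on[OF lin], of UNIV "\<lambda>x. x - p"]) (auto intro: continuous_intros)
    show "continuous_on UNIV (\<lambda>x. Q (x - p) $ 1)"
      using continuous_on_compose2[OF linear_continuous_on[OF bounded_linear_vec_nth[of 1]] cQ] by auto
    show "continuous_on UNIV (\<lambda>x. Q (x - p) $ 2)"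
      using continuous_on_compose2[OF linear_continuous_on[OF bounded_linear_vec_nth[of 2]] cQ] by auto
  qed
  have cg: "continuous_on UNIV g" using g by (rule lipschitz_on_continuous_on)
  have c3: "continuous_on UNIV (\<lambda>x. g (Q (x - p) $ 1))"
    using continuous_on_compose2[OF cg c1] by auto
  have zD: "z \<notin> D" using z D by (simp add: frontier_def interior_open)
  then have "z \<notin> {x \<in> U. Q (x - p) $ 2 < g (Q (x - p) $ 1)}" using DU by blast
  then have "\<not> Q (z - p) $ 2 < g (Q (z - p) $ 1)" using z(2) by blast
  then have ge: "Q (z - p) $ 2 \<ge> g (Q (z - p) $ 1)" by (simp add: not_less)
  show ?thesis
  proof (rule ccontr)
    assume "Q (z - p) $ 2 \<noteq> g (Q (z - p) $ 1)"
    with ge have gt: "g (Q (z - p) $ 1) < Q (z - p) $ 2" by simp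
    define V where "V = U \<inter> {x. g (Q (x - p) $ 1) < Q (x - p) $ 2}"
    have "open V" unfolding V_def using U open_Collect_less[OF c3 c2] by blast
    moreover have "z \<in> V" using gt z(2) unfolding V_def by blast
    moreover have "z \<in> closure D" using z by (simp add: frontier_def)
    ultimately have "V \<inter> closure D \<noteq> {}" by blast
    then have "V \<inter> D \<noteq> {}" using open_Int_closure_eq_empty[OF \<open>open V\<close>, of D] by simp
    then obtain w where w: "w \<in> D" "w \<in> V" by blast
    then have "w \<in> D \<inter> U" unfolding V_def by simp
    then have "Q (w - p) $ 2 < g (Q (w - p) $ 1)" using DU by simp
    moreover have "g (Q (w - p) $ 1) < Q (w - p) $ 2" using w(2) unfolding V_def by simp
    ultimately show False by simp
  qed
qed

lemma choose_charts:
  fixes D :: "(real^2) set"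
  assumes lb: "lipschitz_boundary D"
  shows "\<exists>QQ LL gg UU. \<forall>p \<in> frontier D. orthogonal_transformation (QQ p :: real^2 \<Rightarrow> real^2) \<and>
        (LL p::real)-lipschitz_on UNIV (gg p :: real \<Rightarrow> real) \<and> open (UU p) \<and> p \<in> UU p \<and>
        D \<inter> UU p = {x \<in> UU p. QQ p (x - p) $ 2 < gg p (QQ p (x - p) $ 1)}"
proof -
  define P where "P p T = (orthogonal_transformation (fst T :: real^2 \<Rightarrow> real^2) \<and>
        (fst (snd (snd T))::real)-lipschitz_on UNIV (fst (snd T) :: real \<Rightarrow> real) \<and> open (snd (snd (snd T))) \<and> p \<in> snd (snd (snd T)) \<and>
        D \<inter> snd (snd (snd T)) = {x \<in> snd (snd (snd T)). fst T (x - p) $ 2 < fst (snd T) (fst T (x - p) $ 1)})" for p T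
  have "\<forall>p\<in>frontier D. \<exists>T. P p T"
  proof
    fix p assume "p \<in> frontier D"
    then obtain Q g L U where "orthogonal_transformation (Q :: real^2 \<Rightarrow> real^2) \<and>
        (L::real)-lipschitz_on UNIV (g :: real \<Rightarrow> real) \<and> open U \<and> p \<in> U \<and>
        D \<inter> U = {x \<in> U. Q (x - p) $ 2 < g (Q (x - p) $ 1)}"
      using lb unfolding lipschitz_boundary_def by blast
    then show "\<exists>T. P p T" unfolding P_def by (intro exI[of _ "(Q, g, L, U)"]) simp
  qed
  from bchoice[OF this] obtain f where f: "\<forall>p\<in>frontier D. P p (f p)" by blast
  show ?thesis
    by (rule exI[of _ "\<lambda>p. fst (f p)"], rule exI[of _ "\<lambda>p. fst (snd (snd (f p)))"], rule exI[of _ "\<lambda>p. fst (snd (f p))"], rule exI[of _ "\<lambda>p. snd (snd (snd (f p)))"])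
       (use f in \<open>simp add: P_def\<close>)
qed

lemma density:
  fixes D :: "(real^2) set"
  assumes D: "open D" and bF: "bounded (frontier D)" and lb: "lipschitz_boundary D"
  shows "\<exists>c\<ge>0. \<forall>x r. r > 0 \<longrightarrow> emeasure (bdry_measure D) (frontier D \<inter> ball x r) \<le> ennreal (c * r)"
proof -
  define F where "F = frontier D"
  define M where "M = bdry_measure D"
  have cF: "compact F" unfolding F_def using bF by (simp add: compact_eq_bounded_closed)
  obtain QQ LL gg UU where H0: "\<forall>p \<in> F. orthogonal_transformation (QQ p :: real^2 \<Rightarrow> real^2) \<and>
        (LL p::real)-lipschitz_on UNIV (gg p :: real \<Rightarrow> real) \<and> open (UU p) \<and> p \<in> UU p \<and>
        D \<inter> UU p = {x \<in> UU p. QQ p (x - p) $ 2 < gg p (QQ p (x - p) $ 1)}"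
    using choose_charts[OF lb] unfolding F_def by blast
  note H = H0[rule_format]
  obtain F' where F': "F' \<subseteq> F" "finite F'" "F \<subseteq> (\<Union>p\<in>F'. UU p)"
    using compactE_image[OF cF, of F UU] H by blast
  obtain e where e: "e > 0" "\<And>y. y \<in> F \<Longrightarrow> \<exists>G \<in> UU ` F'. ball y e \<subseteq> G"
    using Heine_Borel_lemma[OF cF F'(3)] H F'(1) by blast
  define Ls where "Ls = (\<Sum>p\<in>F'. LL p)"
  have Ls: "LL p \<le> Ls" if "p \<in> F'" for p
    unfolding Ls_def using that F' H by (intro member_le_sum) (auto intro: lipschitz_on_nonneg)
  define c1 where "c1 = 2 * (1 + Ls)"
  have small: "emeasure M (F \<inter> ball x r) \<le> ennreal (c1 * r)" if r: "r > 0" "r \<le> e/2" for x r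
  proof (cases "F \<inter> ball x r = {}")
    case True then show ?thesis by simp
  next
    case False
    then obtain y where y: "y \<in> F" "y \<in> ball x r" by blast
    obtain p where p: "p \<in> F'" "ball y e \<subseteq> UU p" using e(2)[OF y(1)] by blast
    have pF: "p \<in> F" using p F' by blast
    note Hp = H[OF pF]
    have sub: "F \<inter> ball x r \<subseteq> {z. \<bar>QQ p (z - p) $ 1 - QQ p (x - p) $ 1\<bar> \<le> r \<and> QQ p (z - p) $ 2 = gg p (QQ p (z - p) $ 1)}"
    proof
      fix z assume z: "z \<in> F \<inter> ball x r"
      have "dist y z < e" using z y r dist_triangle[of y z x] by (simp add: dist_commute)
      then have zU: "z \<in> UU p" using p by auto
      have eq: "QQ p (z - p) $ 2 = gg p (QQ p (z - p) $ 1)"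
        using frontier_graph[OF D, of "QQ p" "LL p" "gg p" "UU p" p z] Hp z zU unfolding F_def by blast
      have lin: "linear (QQ p)" using Hp orthogonal_transformation_linear by blast
      have eqQ: "QQ p (z - p) - QQ p (x - p) = QQ p (z - x)" using linear_diff[OF lin, of "z - p" "x - p"] by simp
      have c: "\<bar>(QQ p (z - p) - QQ p (x - p)) $ 1\<bar> \<le> norm (QQ p (z - p) - QQ p (x - p))" by (rule component_le_norm_cart)
      have "\<bar>QQ p (z - p) $ 1 - QQ p (x - p) $ 1\<bar> \<le> norm (QQ p (z - p) - QQ p (x - p))" using c by (simp only: vector_minus_component)
      then have "\<bar>QQ p (z - p) $ 1 - QQ p (x - p) $ 1\<bar> \<le> norm (QQ p (z - x))" by (simp only: eqQ)
      also have "\<dots> = norm (z - x)" using Hp orthogonal_transformation_norm by blast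
      also have "\<dots> \<le> r" using z by (simp add: dist_norm norm_minus_commute)
      finally show "z \<in> {z. \<bar>QQ p (z - p) $ 1 - QQ p (x - p) $ 1\<bar> \<le> r \<and> QQ p (z - p) $ 2 = gg p (QQ p (z - p) $ 1)}"
        using eq by blast
    qed
    have "emeasure M (F \<inter> ball x r) \<le> hausdorff1_outer (F \<inter> ball x r)" unfolding M_def by (rule M_le_H)
    also have "\<dots> \<le> ennreal (2 * r * (1 + LL p))"
      using graph_H[OF _ _ r(1) sub] Hp by blast
    also have "\<dots> \<le> ennreal (c1 * r)"
      using Ls[OF p(1)] r unfolding c1_def by (intro ennreal_leI) (simp add: algebra_simps)
    finally show ?thesis .
  qed
  obtain F2 where F2: "F2 \<subseteq> F" "finite F2" "F \<subseteq> (\<Union>y\<in>F2. ball y (e/2))"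
    using compactE_image[OF cF, of F "\<lambda>y. ball y (e/2)"] e(1) by force
  have Lsp: "Ls \<ge> 0" unfolding Ls_def
  proof (rule sum_nonneg)
    fix p assume "p \<in> F'"
    then have "(LL p)-lipschitz_on UNIV (gg p)" using F'(1) H by blast
    then show "0 \<le> LL p" by (rule lipschitz_on_nonneg)
  qed
  have c1p: "c1 \<ge> 0" unfolding c1_def using Lsp by simp
  define Mt where "Mt = real (card F2) * (c1 * (e/2))"
  have tot: "emeasure M F \<le> ennreal Mt"
  proof -
    have "F = (\<Union>y\<in>F2. F \<inter> ball y (e/2))" using F2 by blast
    then have "emeasure M F = emeasure M (\<Union>y\<in>F2. F \<inter> ball y (e/2))" by simp
    also have "\<dots> \<le> (\<Sum>y\<in>F2. emeasure M (F \<inter> ball y (e/2)))"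
      by (rule emeasure_subadditive_finite[OF F2(2)]) (auto simp: M_def F_def intro!: in_sets_M)
    also have "\<dots> \<le> (\<Sum>y\<in>F2. ennreal (c1 * (e/2)))"
      by (intro sum_mono small) (use e in auto)
    also have "\<dots> = ennreal (\<Sum>y\<in>F2. c1*(e/2))"
      by (rule sum_ennreal) (use c1p e in auto)
    also have "\<dots> = ennreal Mt" by (simp add: Mt_def)
    finally show ?thesis .
  qed
  have Mtp: "Mt \<ge> 0" unfolding Mt_def using c1p e by auto
  define c where "c = c1 + Mt * 2 / e"
  have "c \<ge> 0" unfolding c_def using c1p Mtp e by auto
  moreover have "emeasure M (F \<inter> ball x r) \<le> ennreal (c * r)" if r: "r > 0" for x r
  proof (cases "r \<le> e/2")
    case True
    then have "emeasure M (F \<inter> ball x r) \<le> ennreal (c1 * r)" using small r by blast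
    also have "\<dots> \<le> ennreal (c * r)" using r Mtp e unfolding c_def by (intro ennreal_leI) (simp add: algebra_simps)
    finally show ?thesis .
  next
    case False
    have "emeasure M (F \<inter> ball x r) \<le> emeasure M F"
      by (rule emeasure_mono) (use in_sets_M[of UNIV D] in \<open>auto simp: M_def F_def\<close>)
    also have "\<dots> \<le> ennreal Mt" by (rule tot)
    also have "\<dots> \<le> ennreal (c * r)"
    proof (rule ennreal_leI)
      have "1 \<le> 2 * r / e" using False e by (simp add: field_simps)
      then have "Mt * 1 \<le> Mt * (2 * r / e)" using Mtp by (rule mult_left_mono)
      then have "Mt \<le> Mt * (2 * r / e)" by simp
      also have "\<dots> \<le> c * r" using c1p r e unfolding c_def by (simp add: algebra_simps)
      finally show "Mt \<le> c * r" .
    qed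
    finally show ?thesis .
  qed
  ultimately show ?thesis unfolding M_def F_def by blast
qed

lemma pow_interval:
  fixes b s :: real
  assumes b: "b > 1" and s: "s \<ge> 1"
  shows "\<exists>j::nat. b^j \<le> s \<and> s < b^(j+1)"
proof -
  define l where "l = log b s"
  have l0: "l \<ge> 0" unfolding l_def using b s by simp
  define j where "j = nat \<lfloor>l\<rfloor>"
  have j1: "real j \<le> l" "l < real j + 1" unfolding j_def using l0 by linarith+
  have "b powr real j \<le> s" using j1(1) le_log_iff[of b s "real j"] b s unfolding l_def by simp
  then have c1: "b^j \<le> s" using b by (simp add: powr_realpow)
  have nb: "\<not> b powr (real j + 1) \<le> s" using j1(2) le_log_iff[of b s "real j + 1"] b s unfolding l_def by simp
  have e: "b powr (real j + 1) = b^(j+1)" using powr_realpow[of b "j+1"] b by (simp add: add.commute)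
  have c2: "s < b^(j+1)" using nb e by simp
  show ?thesis using c1 c2 by blast
qed

lemma pointwise:
  fixes A B k :: real and N :: nat
  assumes A: "\<forall>t. 0 < t \<and> t \<le> 1 \<longrightarrow> (cmod (hankel1_0 t))^2 \<le> A / sqrt t"
    and B: "\<forall>t\<ge>1. (cmod (hankel1_0 t))^2 \<le> B / t"
    and A0: "A \<ge> 0" and B0: "B \<ge> 0" and k: "k > 0" and y: "y \<in> F" and xy: "x \<noteq> y"
  shows "ennreal ((cmod (hankel1_0 (k * norm (x - y))))^2) \<le>
     (\<Sum>j. ennreal (A * 2^(j+1)) * indicator (F \<inter> cball x (1/(4^j*k))) y)
     + (\<Sum>j<N. ennreal (B / 2^j) * indicator (F \<inter> ball x (2^(j+1)/k)) y) + ennreal (B / 2^N)"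
    (is "?L \<le> ?S1 + ?S2 + ?S3")
proof -
  define t where "t = k * norm (x - y)"
  have t0: "t > 0" unfolding t_def using k xy by simp
  have dxy: "dist x y = t / k" unfolding t_def using k by (simp add: dist_norm)
  consider "t < 1" | "1 \<le> t" "t < 2^N" | "2^N \<le> t" by linarith
  then show ?thesis
  proof cases
    case 1
    obtain j where j: "4^j \<le> 1/t" "1/t < 4^(j+1)" using pow_interval[of 4 "1/t"] 1 t0 by auto
    have "(cmod (hankel1_0 t))^2 \<le> A / sqrt t" using A 1 t0 by auto
    also have "\<dots> \<le> A * 2^(j+1)"
    proof -
      have "1 / sqrt t = sqrt (1/t)" by (simp add: real_sqrt_divide)
      also have "\<dots> \<le> sqrt (4^(j+1))" using j(2) by simp
      also have "\<dots> = 2^(j+1)" by (simp only: four_pow[of "j+1"] real_sqrt_abs) simp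
      finally have i: "1 / sqrt t \<le> 2^(j+1)" .
      have "A * (1 / sqrt t) \<le> A * 2^(j+1)" by (rule mult_left_mono[OF i A0])
      then show ?thesis by simp
    qed
    finally have h: "(cmod (hankel1_0 t))^2 \<le> A * 2^(j+1)" .
    have "y \<in> F \<inter> cball x (1/(4^j*k))"
    proof -
      have "t \<le> 1/4^j" using j(1) t0 by (simp add: field_simps)
      then have "t / k \<le> 1/(4^j*k)" using k by (simp add: field_simps)
      then show ?thesis using y dxy by simp
    qed
    then have "ennreal (A * 2^(j+1)) = ennreal (A * 2^(j+1)) * indicator (F \<inter> cball x (1/(4^j*k))) y" by simp
    also have "\<dots> \<le> ?S1"
    proof -
      define f where "f j = ennreal (A * 2^(j+1)) * indicator (F \<inter> cball x (1/(4^j*k))) y" for j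
      have "sum f {j} \<le> suminf f" by (rule sum_le_suminf) auto
      then have "f j \<le> suminf f" by simp
      then show ?thesis unfolding f_def .
    qed
    finally have "?L \<le> ?S1" using h unfolding t_def by (meson ennreal_leI order.trans)
    then show ?thesis by (meson add_increasing2 le_add1 order.trans zero_le) 
  next
    case 2
    obtain j where j: "2^j \<le> t" "t < 2^(j+1)" using pow_interval[of 2 t] 2 by auto
    have jN: "j < N"
    proof (rule ccontr)
      assume "\<not> j < N"
      then have p: "(2::real)^N \<le> 2^j" by simp
      show False using j(1) 2 p by linarith
    qed
    have "(cmod (hankel1_0 t))^2 \<le> B / t" using B 2 by auto
    also have "\<dots> \<le> B / 2^j" using j(1) B0 t0 by (intro divide_left_mono) auto
    finally have h: "(cmod (hankel1_0 t))^2 \<le> B / 2^j" .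
    have "y \<in> F \<inter> ball x (2^(j+1)/k)"
      using y dxy j(2) k by (simp add: divide_strict_right_mono)
    then have "ennreal (B / 2^j) = ennreal (B / 2^j) * indicator (F \<inter> ball x (2^(j+1)/k)) y" by simp
    also have "\<dots> \<le> ?S2"
      by (rule member_le_sum[of j "{..<N}" "\<lambda>j. ennreal (B / 2^j) * indicator (F \<inter> ball x (2^(j+1)/k)) y"]) (use jN in auto)
    finally have "?L \<le> ?S2" using h unfolding t_def by (meson ennreal_leI order.trans)
    then show ?thesis by (meson add_increasing add_increasing2 zero_le order.trans)
  next
    case 3
    have "(1::real) \<le> 2^N" by simp
    then have "1 \<le> t" using 3 by linarith
    then have "(cmod (hankel1_0 t))^2 \<le> B / t" using B by blast
    also have "\<dots> \<le> B / 2^N" using 3 B0 t0 by (intro divide_left_mono) auto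
    finally have "?L \<le> ?S3" unfolding t_def by (rule ennreal_leI)
    then show ?thesis by (meson add_increasing zero_le order.trans)
  qed
qed

lemma geo_term: "A * 2^(j+1) * (2 * c / (4^j * k)) = (4 * A * c / k) * (1/2::real)^j"
proof -
  have "(4::real)^j = 2^j * 2^j" by (simp add: four_pow power2_eq_square)
  then show ?thesis by (simp add: field_simps power_divide)
qed

lemma integral_bound:
  fixes D :: "(real^2) set" and A B c k :: real and N :: nat
  assumes A: "\<forall>t. 0 < t \<and> t \<le> 1 \<longrightarrow> (cmod (hankel1_0 t))^2 \<le> A / sqrt t"
    and B: "\<forall>t\<ge>1. (cmod (hankel1_0 t))^2 \<le> B / t"
    and A0: "A \<ge> 0" and B0: "B \<ge> 0" and k: "k > 0" and x: "x \<notin> frontier D" and c: "c \<ge> 0"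
    and dens: "\<forall>x r. r > 0 \<longrightarrow> emeasure (bdry_measure D) (frontier D \<inter> ball x r) \<le> ennreal (c * r)"
  shows "\<exists>G. G \<in> borel_measurable (bdry_measure D) \<and>
     (\<forall>y\<in>frontier D. ennreal ((cmod (hankel1_0 (k * norm (x - y))))^2) \<le> G y) \<and>
     (\<integral>\<^sup>+ y. G y \<partial>bdry_measure D)
     \<le> ennreal (8*A*c/k + 2*B*c*N/k) + ennreal (B / 2^N) * emeasure (bdry_measure D) (frontier D)"
proof -
  define M where "M = bdry_measure D"
  define F where "F = frontier D"
  have sp: "space M = F" unfolding M_def F_def by (rule space_M)
  have ms: "F \<inter> S \<in> sets M" if "S \<in> sets borel" for S using in_sets_M[OF that] unfolding M_def F_def .
  define f1 where "f1 j y = ennreal (A * 2^(j+1)) * indicator (F \<inter> cball x (1/(4^j*k))) y" for j y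
  define f2 where "f2 j y = ennreal (B / 2^j) * indicator (F \<inter> ball x (2^(j+1)/k)) y" for j y
  have m1: "f1 j \<in> borel_measurable M" for j
    unfolding f1_def using ms[of "cball x (1/(4^j*k))"] by (intro borel_measurable_times_ennreal) auto
  have m2: "f2 j \<in> borel_measurable M" for j
    unfolding f2_def using ms[of "ball x (2^(j+1)/k)"] by (intro borel_measurable_times_ennreal) auto
  define G where "G y = (\<Sum>j. f1 j y) + (\<Sum>j<N. f2 j y) + ennreal (B / 2^N)" for y
  have Gm: "G \<in> borel_measurable M" unfolding G_def using m1 m2 by measurable
  have Gpt: "\<forall>y\<in>F. ennreal ((cmod (hankel1_0 (k * norm (x - y))))^2) \<le> G y"
  proof
    fix y assume y: "y \<in> F"
    then have xy: "x \<noteq> y" using x unfolding F_def by auto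
    show "ennreal ((cmod (hankel1_0 (k * norm (x - y))))^2) \<le> G y"
      unfolding G_def f1_def f2_def by (rule pointwise[OF A B A0 B0 k y xy])
  qed
  have "(\<integral>\<^sup>+ y. G y \<partial>M) = (\<integral>\<^sup>+ y. (\<Sum>j. f1 j y) \<partial>M) + (\<integral>\<^sup>+ y. (\<Sum>j<N. f2 j y) \<partial>M) + (\<integral>\<^sup>+ y. ennreal (B / 2^N) \<partial>M)"
    unfolding G_def using m1 m2 by (simp add: nn_integral_add borel_measurable_suminf)
  also have "(\<integral>\<^sup>+ y. (\<Sum>j. f1 j y) \<partial>M) = (\<Sum>j. ennreal (A * 2^(j+1)) * emeasure M (F \<inter> cball x (1/(4^j*k))))"
  proof -
    have "integral\<^sup>N M (f1 j) = ennreal (A * 2^(j+1)) * emeasure M (F \<inter> cball x (1/(4^j*k)))" for j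
      unfolding f1_def by (rule nn_integral_cmult_indicator[OF ms]) simp
    then show ?thesis by (subst nn_integral_suminf[OF m1]) simp
  qed
  also have "\<dots> \<le> (\<Sum>j. ennreal ((4 * A * c / k) * (1/2)^j))"
  proof (rule suminf_le)
    fix j
    have r: "0 < 1/(4^j*k)" using k by simp
    have "emeasure M (F \<inter> cball x (1/(4^j*k))) \<le> emeasure M (F \<inter> ball x (2 * (1/(4^j*k))))"
    proof (rule emeasure_mono)
      show "F \<inter> cball x (1/(4^j*k)) \<subseteq> F \<inter> ball x (2 * (1/(4^j*k)))"
      proof
        fix t assume "t \<in> F \<inter> cball x (1/(4^j*k))"
        then have "t \<in> F" "dist x t \<le> 1/(4^j*k)" by auto
        moreover have "1/(4^j*k) < 2 * (1/(4^j*k))" using r by linarith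
        ultimately show "t \<in> F \<inter> ball x (2 * (1/(4^j*k)))" by auto
      qed
    qed (use ms in auto)
    also have "\<dots> \<le> ennreal (c * (2 * (1/(4^j*k))))" using dens[rule_format, of "2 * (1/(4^j*k))" x] r unfolding M_def F_def by linarith
    finally have "ennreal (A * 2^(j+1)) * emeasure M (F \<inter> cball x (1/(4^j*k))) \<le> ennreal (A * 2^(j+1)) * ennreal (c * (2 * (1/(4^j*k))))"
      by (rule mult_left_mono) simp
    also have "\<dots> = ennreal (A * 2^(j+1) * (2 * c / (4^j * k)))"
      using A0 c k by (simp add: ennreal_mult[symmetric])
    also have "\<dots> = ennreal ((4 * A * c / k) * (1/2)^j)" by (simp only: geo_term)
    finally show "ennreal (A * 2^(j+1)) * emeasure M (F \<inter> cball x (1/(4^j*k))) \<le> ennreal ((4 * A * c / k) * (1/2)^j)" .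
  qed auto
  also have "\<dots> = ennreal (8*A*c/k)"
  proof -
    have s: "summable (\<lambda>j. (4 * A * c / k) * (1/2::real)^j)" by (intro summable_mult summable_geometric) simp
    have "(\<Sum>j. ennreal ((4 * A * c / k) * (1/2)^j)) = ennreal (\<Sum>j. (4 * A * c / k) * (1/2::real)^j)"
      by (rule suminf_ennreal2[OF _ s]) (use A0 c k in auto)
    also have "(\<Sum>j. (4 * A * c / k) * (1/2::real)^j) = 8*A*c/k"
      by (subst suminf_mult) (simp_all add: suminf_geometric summable_geometric)
    finally show ?thesis .
  qed
  also have "(\<integral>\<^sup>+ y. (\<Sum>j<N. f2 j y) \<partial>M) = (\<Sum>j<N. ennreal (B / 2^j) * emeasure M (F \<inter> ball x (2^(j+1)/k)))"
  proof -
    have "integral\<^sup>N M (f2 j) = ennreal (B / 2^j) * emeasure M (F \<inter> ball x (2^(j+1)/k))" for j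
      unfolding f2_def by (rule nn_integral_cmult_indicator[OF ms]) simp
    then show ?thesis by (subst nn_integral_sum) (auto simp: m2)
  qed
  also have "\<dots> \<le> (\<Sum>j<N. ennreal (2*B*c/k))"
  proof (rule sum_mono)
    fix j
    have r: "0 < 2^(j+1)/k" using k by simp
    have "ennreal (B / 2^j) * emeasure M (F \<inter> ball x (2^(j+1)/k)) \<le> ennreal (B / 2^j) * ennreal (c * (2^(j+1)/k))"
      using dens[rule_format, OF r, of x] unfolding M_def F_def by (intro mult_left_mono) auto
    also have "\<dots> = ennreal (B / 2^j * (c * (2^(j+1)/k)))"
      using B0 c k by (simp add: ennreal_mult[symmetric])
    also have "B / 2^j * (c * (2^(j+1)/k)) = 2*B*c/k" by (simp add: field_simps)
    finally show "ennreal (B / 2^j) * emeasure M (F \<inter> ball x (2^(j+1)/k)) \<le> ennreal (2*B*c/k)" .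
  qed
  also have "\<dots> = ennreal (\<Sum>j<N. 2*B*c/k)"
    by (rule sum_ennreal) (use B0 c k in auto)
  also have "(\<Sum>j<N. 2*B*c/k) = 2*B*c*N/k" by simp
  also have "(\<integral>\<^sup>+ y. ennreal (B / 2^N) \<partial>M) = ennreal (B / 2^N) * emeasure M F" by (simp add: sp)
  finally have calc: "(\<integral>\<^sup>+ y. G y \<partial>M)
     \<le> ennreal (8*A*c/k) + ennreal (2*B*c*N/k) + ennreal (B / 2^N) * emeasure M F"
    by (auto intro: add_mono)
  have e: "ennreal (8*A*c/k + 2*B*c*N/k) = ennreal (8*A*c/k) + ennreal (2*B*c*N/k)"
    by (rule ennreal_plus) (use A0 B0 c k in auto)
  show ?thesis using calc Gm Gpt unfolding e M_def F_def by blast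
qed

lemma amgm_min:
  fixes S P Q :: real
  assumes h: "\<And>l. l > 0 \<Longrightarrow> S \<le> l/2*Q + P/(2*l)" and P: "P \<ge> 0" and Q: "Q \<ge> 0"
  shows "S \<le> sqrt (P*Q)"
proof (cases "P > 0 \<and> Q > 0")
  case True
  define l where "l = sqrt (P/Q)"
  have l: "l > 0" using True by (simp add: l_def)
  have "l/2*Q = sqrt (P*Q)/2"
  proof -
    have e1: "sqrt (P/Q * Q^2) = sqrt (P*Q)" using True by (simp add: power2_eq_square)
    have e3: "sqrt (P/Q * Q^2) = sqrt (P/Q) * sqrt (Q^2)" by (rule real_sqrt_mult)
    have e4: "sqrt (Q^2) = Q" using True by simp
    have e2: "sqrt (P/Q * Q^2) = l * Q" unfolding l_def using e3 e4 by simp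
    show ?thesis using e1 e2 by simp
  qed
  moreover have "P/(2*l) = sqrt (P*Q)/2"
  proof -
    have e1: "sqrt (P^2 / (P/Q)) = sqrt (P*Q)" using True by (simp add: power2_eq_square)
    have e3: "sqrt (P^2 / (P/Q)) = sqrt (P^2) / sqrt (P/Q)" by (rule real_sqrt_divide)
    have e4: "sqrt (P^2) = P" using True by simp
    have e2: "sqrt (P^2 / (P/Q)) = P / l" unfolding l_def using e3 e4 by simp
    show ?thesis using e1 e2 by simp
  qed
  ultimately show ?thesis using h[OF l] by simp
next
  case False
  then have PQ: "P = 0 \<or> Q = 0" using P Q by auto
  have "S \<le> 0"
  proof (rule ccontr)
    assume S: "\<not> S \<le> 0"
    show False
    proof (cases "P = 0")
      case True
      define l where "l = S / (Q + 1)"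
      have l: "l > 0" using S Q by (simp add: l_def)
      have "S \<le> l/2*Q" using h[OF l] True by simp
      also have "\<dots> < S"
      proof -
        have q: "Q / (2*(Q+1)) < 1" using Q by (simp add: divide_less_eq)
        have "S * (Q / (2*(Q+1))) < S * 1" using S q by (intro mult_strict_left_mono) auto
        moreover have "l/2*Q = S * (Q / (2*(Q+1)))" unfolding l_def by (simp add: field_simps)
        ultimately show ?thesis by linarith
      qed
      finally show False by simp
    next
      case False
      then have Q0: "Q = 0" using PQ by simp
      define l where "l = P / S"
      have l: "l > 0" using S P False by (simp add: l_def)
      have "S \<le> P/(2*l)" using h[OF l] Q0 by simp
      also have "\<dots> = S/2" using S P False unfolding l_def by (simp add: field_simps)
      finally show False using S by simp
    qed
  qed
  moreover have "0 \<le> sqrt (P*Q)" using P Q by simp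
  ultimately show ?thesis by linarith
qed

lemma ennreal_lin:
  fixes a b X Y :: real
  assumes "0 \<le> a" "0 \<le> b" "0 \<le> X" "0 \<le> Y"
  shows "ennreal (a*X + b*Y) = ennreal a * ennreal X + ennreal b * ennreal Y"
proof -
  have 1: "ennreal (a*X + b*Y) = ennreal (a*X) + ennreal (b*Y)" using assms by (intro ennreal_plus) auto
  have 2: "ennreal (a*X) = ennreal a * ennreal X" using assms by (intro ennreal_mult) auto
  have 3: "ennreal (b*Y) = ennreal b * ennreal Y" using assms by (intro ennreal_mult) auto
  show ?thesis by (simp only: 1 2 3)
qed

lemma cs_step:
  fixes f \<phi> :: "'a \<Rightarrow> complex" and G :: "'a \<Rightarrow> ennreal"
  assumes Gm: "G \<in> borel_measurable M" and Gpt: "\<forall>y\<in>space M. ennreal ((cmod (f y))^2) \<le> G y"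
    and GQ: "(\<integral>\<^sup>+ y. G y \<partial>M) \<le> ennreal Q" and Q: "Q \<ge> 0"
    and \<phi>m: "\<phi> \<in> borel_measurable M" and \<phi>i: "integrable M (\<lambda>y. (cmod (\<phi> y))^2)"
  shows "cmod (LINT y|M. f y * \<phi> y) \<le> sqrt Q * sqrt (LINT y|M. (cmod (\<phi> y))^2)"
proof -
  define P where "P = (LINT y|M. (cmod (\<phi> y))^2)"
  have P: "P \<ge> 0" unfolding P_def by (rule integral_nonneg_AE) auto
  have Pn: "(\<integral>\<^sup>+ y. ennreal ((cmod (\<phi> y))^2) \<partial>M) = ennreal P"
    unfolding P_def by (rule nn_integral_eq_integral[OF \<phi>i]) auto
  have main: "cmod (LINT y|M. f y * \<phi> y) \<le> l/2*Q + P/(2*l)" if l: "l > 0" for l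
  proof (cases "integrable M (\<lambda>y. f y * \<phi> y)")
    case False
    then show ?thesis using l Q P by (simp add: not_integrable_integral_eq)
  next
    case True
    have "ennreal (cmod (LINT y|M. f y * \<phi> y)) \<le> (\<integral>\<^sup>+ y. ennreal (cmod (f y * \<phi> y)) \<partial>M)"
      by (rule integral_norm_bound_ennreal[OF True])
    also have "\<dots> \<le> (\<integral>\<^sup>+ y. ennreal (l/2) * G y + ennreal (1/(2*l)) * ennreal ((cmod (\<phi> y))^2) \<partial>M)"
    proof (rule nn_integral_mono)
      fix y assume y: "y \<in> space M"
      have "cmod (f y * \<phi> y) \<le> l/2 * (cmod (f y))^2 + 1/(2*l) * (cmod (\<phi> y))^2"
      proof -
        have "0 \<le> (sqrt l * cmod (f y) - cmod (\<phi> y) / sqrt l)^2" by simp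
        also have "\<dots> = l * (cmod (f y))^2 - 2 * (cmod (f y) * cmod (\<phi> y)) + (cmod (\<phi> y))^2 / l"
          using l by (simp add: power2_diff power_mult_distrib power_divide)
        finally show ?thesis using l by (simp add: norm_mult field_simps)
      qed
      then have "ennreal (cmod (f y * \<phi> y)) \<le> ennreal (l/2 * (cmod (f y))^2 + 1/(2*l) * (cmod (\<phi> y))^2)"
        by (rule ennreal_leI)
      also have "\<dots> = ennreal (l/2) * ennreal ((cmod (f y))^2) + ennreal (1/(2*l)) * ennreal ((cmod (\<phi> y))^2)"
        using l by (intro ennreal_lin) auto
      also have "\<dots> \<le> ennreal (l/2) * G y + ennreal (1/(2*l)) * ennreal ((cmod (\<phi> y))^2)"
        using Gpt y by (intro add_right_mono mult_left_mono) auto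
      finally show "ennreal (cmod (f y * \<phi> y)) \<le> ennreal (l/2) * G y + ennreal (1/(2*l)) * ennreal ((cmod (\<phi> y))^2)" .
    qed
    also have "\<dots> = ennreal (l/2) * (\<integral>\<^sup>+ y. G y \<partial>M) + ennreal (1/(2*l)) * (\<integral>\<^sup>+ y. ennreal ((cmod (\<phi> y))^2) \<partial>M)"
      using Gm \<phi>m by (simp add: nn_integral_add nn_integral_cmult)
    also have "\<dots> \<le> ennreal (l/2) * ennreal Q + ennreal (1/(2*l)) * ennreal P"
      unfolding Pn using GQ by (intro add_right_mono mult_left_mono) auto
    also have "\<dots> = ennreal (l/2*Q + 1/(2*l)*P)"
      using l Q P by (intro ennreal_lin[symmetric]) auto
    finally have X: "ennreal (cmod (LINT y|M. f y * \<phi> y)) \<le> ennreal (l/2*Q + 1/(2*l)*P)" .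
    have nn: "0 \<le> l/2*Q + 1/(2*l)*P" using l Q P by simp
    have "cmod (LINT y|M. f y * \<phi> y) \<le> l/2*Q + 1/(2*l)*P" using ennreal_le_iff[OF nn] X by blast
    then show ?thesis by simp
  qed
  have "cmod (LINT y|M. f y * \<phi> y) \<le> sqrt (P*Q)" by (rule amgm_min[OF main P Q])
  then show ?thesis unfolding P_def by (simp add: real_sqrt_mult mult.commute)
qed

lemma final_ineq:
  fixes A B c Mt d k0 k :: real and N :: nat
  assumes A: "A \<ge> 0" and B: "B \<ge> 0" and c: "c \<ge> 0" and Mt: "Mt \<ge> 0" and d: "d > 0"
    and k0: "k0 > 0" and k: "k \<ge> k0" and N: "N = nat \<lceil>log 2 (1 + k*Mt)\<rceil>"
  shows "8*A*c/k + 2*B*c*N/k + B/2^N*Mt \<le>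
     ((8*A*c + 2*B*c*(log 2 (1 + Mt/d) + 1) + B) / ln (1 + k0*d) + 2*B*c/ln 2) * ln (1 + k*d) / k"
proof -
  have kp: "k > 0" using k k0 by simp
  define y where "y = log 2 (1 + k*Mt)"
  have y1: "1 \<le> 1 + k*Mt" using kp Mt by simp
  have y0: "y \<ge> 0" unfolding y_def using y1 by (subst zero_le_log_cancel_iff) auto
  have Ny: "y \<le> real N" "real N \<le> y + 1" unfolding N y_def[symmetric] using y0 by linarith+
  have "1 + k*Mt = 2 powr y" unfolding y_def using y1 by (subst powr_log_cancel) auto
  also have "\<dots> \<le> 2 powr (real N)" using Ny(1) by (intro powr_mono) auto
  also have "\<dots> = 2^N" by (simp add: powr_realpow)
  finally have pN: "1 + k*Mt \<le> 2^N" .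
  have t3: "B/2^N*Mt \<le> B/k"
  proof -
    have "k * Mt \<le> 2^N" using pN by simp
    then have "Mt / 2^N \<le> 1 / k" using kp by (simp add: field_simps)
    then have "B * (Mt / 2^N) \<le> B * (1/k)" using B by (rule mult_left_mono)
    then show ?thesis by simp
  qed
  have "1 + k*Mt \<le> (1 + Mt/d) * (1 + k*d)"
  proof -
    have "(1 + Mt/d) * (1 + k*d) = 1 + k*d + Mt/d + k*Mt" using d by (simp add: field_simps)
    then show ?thesis using kp d Mt by simp
  qed
  then have "y \<le> log 2 ((1 + Mt/d) * (1 + k*d))" unfolding y_def using y1 by (intro log_mono) auto
  also have "\<dots> = log 2 (1 + Mt/d) + log 2 (1 + k*d)" 
  proof -
    have "1 + Mt/d > 0" using Mt d by (simp add: add_pos_nonneg)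
    moreover have "1 + k*d > 0" using kp d by (simp add: add_pos_pos)
    ultimately show ?thesis by (simp add: log_mult)
  qed
  also have "log 2 (1 + k*d) = ln (1 + k*d) / ln 2" by (simp add: log_def)
  finally have ylog: "y \<le> log 2 (1 + Mt/d) + ln (1 + k*d) / ln 2" .
  define K0 where "K0 = 8*A*c + 2*B*c*(log 2 (1 + Mt/d) + 1) + B"
  define K1 where "K1 = 2*B*c/ln 2"
  define l where "l = ln (1 + k*d)"
  define l0 where "l0 = ln (1 + k0*d)"
  have g1: "1 < 1 + k0*d" using k0 d by simp
  have l0p: "l0 > 0" unfolding l0_def using g1 by (rule ln_gt_zero)
  have "k0 * d \<le> k * d" using k d by (intro mult_right_mono) auto
  then have "1 + k0*d \<le> 1 + k*d" by simp
  then have ll0: "l0 \<le> l" unfolding l_def l0_def using g1 by (subst ln_le_cancel_iff) auto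
  have "1 \<le> 1 + Mt/d" using Mt d by simp
  then have lg: "0 \<le> log 2 (1 + Mt/d)" by (subst zero_le_log_cancel_iff) auto
  have K0p: "K0 \<ge> 0" using lg unfolding K0_def using A B c Mt d by (auto intro!: add_nonneg_nonneg mult_nonneg_nonneg)
  have "k * (8*A*c/k + 2*B*c*N/k + B/2^N*Mt) = 8*A*c + 2*B*c*N + k * (B/2^N*Mt)"
    using kp by (simp add: field_simps)
  also have "k * (B/2^N*Mt) \<le> k * (B/k)" using t3 kp by (intro mult_left_mono) auto
  also have "k * (B/k) = B" using kp by simp
  also have "2*B*c*N \<le> 2*B*c*(log 2 (1 + Mt/d) + 1 + l / ln 2)"
  proof -
    have "real N \<le> log 2 (1 + Mt/d) + 1 + l / ln 2" using Ny(2) ylog unfolding l_def by linarith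
    then show ?thesis using B c by (intro mult_left_mono) auto
  qed
  also have "8*A*c + 2*B*c*(log 2 (1 + Mt/d) + 1 + l / ln 2) + B = K0 + K1 * l"
    unfolding K0_def K1_def by (simp add: algebra_simps)
  also have "K0 + K1 * l \<le> (K0 / l0 + K1) * l"
  proof -
    have "K0 * 1 \<le> K0 * (l / l0)" using ll0 l0p K0p by (intro mult_left_mono) (auto simp: field_simps)
    then have "K0 \<le> K0 / l0 * l" by simp
    then show ?thesis by (simp add: algebra_simps)
  qed
  finally have "k * (8*A*c/k + 2*B*c*N/k + B/2^N*Mt) \<le> (K0 / l0 + K1) * l" by simp
  then show ?thesis unfolding K0_def K1_def l_def l0_def using kp by (simp add: field_simps)
qed

lemma ennreal_zero_small:
  fixes X :: ennreal and c :: real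
  assumes h: "\<And>r. r > 0 \<Longrightarrow> X \<le> ennreal (c * r)" and c: "c \<ge> 0"
  shows "X = 0"
proof -
  have "X \<le> ennreal (c * 1)" using h[of 1] by simp
  then obtain x where x: "X = ennreal x" "x \<ge> 0" by (metis ennreal_cases ennreal_le_iff2 ennreal_less_top leD top.not_eq_extremum)
  have "x \<le> 0"
  proof (rule ccontr)
    assume "\<not> x \<le> 0"
    then have xp: "x > 0" by simp
    define r where "r = x / (2 * (c + 1))"
    have r: "r > 0" unfolding r_def using xp c by simp
    have "x \<le> c * r" using h[OF r] x c r by simp
    also have "c * r < x"
    proof -
      have "c / (2*(c+1)) < 1" using c by (simp add: divide_less_eq)
      then have "x * (c / (2*(c+1))) < x * 1" using xp by (intro mult_strict_left_mono) auto
      moreover have "c * r = x * (c / (2*(c+1)))" unfolding r_def by (simp add: field_simps)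
      ultimately show ?thesis by linarith
    qed
    finally show False by simp
  qed
  then show ?thesis using x by simp
qed

theorem lemma3p3:
  fixes D :: "(real^2) set" and k0 :: real
  assumes "open D" and "connected D" and "D \<noteq> {}"
    and "bounded (frontier D)" and "lipschitz_boundary D"
    and "k0 > 0"
  shows "\<exists>C>0. \<forall>k\<ge>k0. \<forall>\<phi>. in_L2_bdry D \<phi> \<longrightarrow>
           (\<forall>x\<in>D. cmod (single_layer D k \<phi> x)
              \<le> C * k powr (-1/2) * sqrt (ln (1 + k * diameter (frontier D))) * L2_norm_bdry D \<phi>)"
proof -
  note oD = assms(1) and bF = assms(4) and lb = assms(5) and k0 = assms(6)
  define M where "M = bdry_measure D"
  define F where "F = frontier D"
  define d where "d = diameter F"
  have spM: "space M = F" unfolding M_def F_def by (rule space_M)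
  obtain A1 where A1: "\<forall>t. 0 < t \<and> t \<le> 1 \<longrightarrow> (cmod (hankel1_0 t))^2 \<le> A1 / sqrt t" using H_small by blast
  define A where "A = max A1 0"
  have A0: "A \<ge> 0" unfolding A_def by simp
  have HA: "\<forall>t. 0 < t \<and> t \<le> 1 \<longrightarrow> (cmod (hankel1_0 t))^2 \<le> A / sqrt t"
  proof (intro allI impI)
    fix t :: real assume t: "0 < t \<and> t \<le> 1"
    then have "(cmod (hankel1_0 t))^2 \<le> A1 / sqrt t" using A1 by blast
    also have "\<dots> \<le> A / sqrt t" using t unfolding A_def by (intro divide_right_mono) auto
    finally show "(cmod (hankel1_0 t))^2 \<le> A / sqrt t" .
  qed
  obtain B1 where B1: "\<forall>t\<ge>1. (cmod (hankel1_0 t))^2 \<le> B1 / t" using H_decay by blast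
  define B where "B = max B1 0"
  have B0: "B \<ge> 0" unfolding B_def by simp
  have HB: "\<forall>t\<ge>1. (cmod (hankel1_0 t))^2 \<le> B / t"
  proof (intro allI impI)
    fix t :: real assume t: "t \<ge> 1"
    then have "(cmod (hankel1_0 t))^2 \<le> B1 / t" using B1 by blast
    also have "\<dots> \<le> B / t" using t unfolding B_def by (intro divide_right_mono) auto
    finally show "(cmod (hankel1_0 t))^2 \<le> B / t" .
  qed
  obtain c where c: "c \<ge> 0" and dens: "\<forall>x r. r > 0 \<longrightarrow> emeasure (bdry_measure D) (frontier D \<inter> ball x r) \<le> ennreal (c * r)"
    using density[OF oD bF lb] by blast
  obtain R where R: "R > 0" "F \<subseteq> ball 0 R" using bounded_subset_ballD[OF bF] unfolding F_def by blast
  define Mt where "Mt = c * R"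
  have Mt0: "Mt \<ge> 0" unfolding Mt_def using c R by simp
  have totM: "emeasure M F \<le> ennreal Mt"
  proof -
    have "F = F \<inter> ball 0 R" using R by blast
    then have "emeasure M F = emeasure M (F \<inter> ball 0 R)" by simp
    also have "\<dots> \<le> ennreal (c * R)" using dens R unfolding M_def F_def by blast
    finally show ?thesis unfolding Mt_def .
  qed
  have xF: "x \<notin> frontier D" if "x \<in> D" for x using that oD by (simp add: frontier_def interior_open)
  have d0: "d \<ge> 0" unfolding d_def F_def using bF by (rule diameter_ge_0)
  show ?thesis
  proof (cases "d = 0")
    case True
    have M0: "emeasure M F = 0"
    proof (cases "F = {}")
      case True then show ?thesis by simp
    next
      case False
      then obtain p where p: "p \<in> F" by blast
      have Fb: "F \<subseteq> ball p r" if r: "r > 0" for r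
      proof
        fix y assume y: "y \<in> F"
        have "dist p y \<le> d" unfolding d_def using bF p y unfolding F_def by (intro diameter_bounded_bound) auto
        then show "y \<in> ball p r" using True r by simp
      qed
      have "emeasure M F \<le> ennreal (c * r)" if r: "r > 0" for r
      proof -
        have "emeasure M F = emeasure M (F \<inter> ball p r)" using Fb[OF r] by (simp add: Int_absorb2)
        also have "\<dots> \<le> ennreal (c * r)" using dens r unfolding M_def F_def by blast
        finally show ?thesis .
      qed
      then show ?thesis using ennreal_zero_small c by blast
    qed
    have zero: "single_layer D k \<phi> x = 0" for k \<phi> x
    proof -
      have "AE y in M. Phi k x y * \<phi> y = 0"
        by (rule AE_I'[of "space M"]) (use M0 spM in \<open>auto simp: null_sets_def\<close>)
      then show ?thesis unfolding single_layer_def M_def[symmetric] by (rule integral_eq_zero_AE)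
    qed
    show ?thesis
      by (rule exI[of _ 1]) (auto simp: zero True[unfolded d_def F_def])
  next
    case False
    then have dp: "d > 0" using d0 by simp
    define K0 where "K0 = 8*A*c + 2*B*c*(log 2 (1 + Mt/d) + 1) + B"
    define Kf where "Kf = K0 / ln (1 + k0*d) + 2*B*c/ln 2"
    have "1 \<le> 1 + Mt/d" using Mt0 dp by simp
    then have lg: "0 \<le> log 2 (1 + Mt/d)" by (subst zero_le_log_cancel_iff) auto
    have K0p: "K0 \<ge> 0" using lg unfolding K0_def using A0 B0 c by (auto intro!: add_nonneg_nonneg mult_nonneg_nonneg)
    have "1 < 1 + k0*d" using k0 dp by simp
    then have "ln (1 + k0*d) > 0" by (rule ln_gt_zero)
    then have Kfp: "Kf \<ge> 0" unfolding Kf_def using K0p B0 c by (auto intro!: add_nonneg_nonneg mult_nonneg_nonneg divide_nonneg_pos)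
    define C where "C = sqrt Kf + 1"
    have "sqrt Kf \<ge> 0" using Kfp by simp
    then have Cp: "C > 0" unfolding C_def by linarith
    have main: "cmod (single_layer D k \<phi> x) \<le> C * k powr (-1/2) * sqrt (ln (1 + k * d)) * L2_norm_bdry D \<phi>"
      if k: "k \<ge> k0" and \<phi>: "in_L2_bdry D \<phi>" and x: "x \<in> D" for k \<phi> x
    proof -
      have kp: "k > 0" using k k0 by simp
      define N where "N = nat \<lceil>log 2 (1 + k*Mt)\<rceil>"
      obtain G where Gm: "G \<in> borel_measurable M" and Gpt: "\<forall>y\<in>F. ennreal ((cmod (hankel1_0 (k * norm (x - y))))^2) \<le> G y"
        and GI: "(\<integral>\<^sup>+ y. G y \<partial>M) \<le> ennreal (8*A*c/k + 2*B*c*N/k) + ennreal (B / 2^N) * emeasure M F"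
        using integral_bound[OF HA HB A0 B0 kp xF[OF x] c dens, of N] unfolding M_def F_def by blast
      define Q where "Q = Kf * ln (1 + k*d) / k"
      have lkd: "ln (1 + k*d) \<ge> 0" using kp dp by simp
      have Q0: "Q \<ge> 0" unfolding Q_def using Kfp lkd kp by simp
      have GQ: "(\<integral>\<^sup>+ y. G y \<partial>M) \<le> ennreal Q"
      proof -
        have "ennreal (B / 2^N) * emeasure M F \<le> ennreal (B / 2^N) * ennreal Mt"
          using totM by (rule mult_left_mono) simp
        also have "\<dots> = ennreal (B / 2^N * Mt)" using B0 Mt0 by (intro ennreal_mult[symmetric]) auto
        finally have "(\<integral>\<^sup>+ y. G y \<partial>M) \<le> ennreal (8*A*c/k + 2*B*c*N/k) + ennreal (B / 2^N * Mt)"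
          using GI by (meson add_left_mono order.trans)
        also have "\<dots> = ennreal (8*A*c/k + 2*B*c*N/k + B / 2^N * Mt)"
          using A0 B0 c kp Mt0 by (intro ennreal_plus[symmetric]) auto
        also have "\<dots> \<le> ennreal Q"
          unfolding Q_def Kf_def K0_def
          by (intro ennreal_leI final_ineq[OF A0 B0 c Mt0 dp k0 k N_def])
        finally show ?thesis .
      qed
      have Gpt': "\<forall>y\<in>space M. ennreal ((cmod (Phi k x y))^2) \<le> G y"
      proof
        fix y assume "y \<in> space M"
        then have y: "y \<in> F" using spM by simp
        have e: "cmod (Phi k x y) = cmod (hankel1_0 (k * norm (x - y))) / 4"
          by (simp add: Phi_def norm_mult)
        have "cmod (Phi k x y) \<le> cmod (hankel1_0 (k * norm (x - y)))"
          using e norm_ge_zero[of "hankel1_0 (k * norm (x - y))"] by linarith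
        then have "(cmod (Phi k x y))^2 \<le> (cmod (hankel1_0 (k * norm (x - y))))^2"
          by (rule power_mono) simp
        then have "ennreal ((cmod (Phi k x y))^2) \<le> ennreal ((cmod (hankel1_0 (k * norm (x - y))))^2)"
          by (rule ennreal_leI)
        also have "\<dots> \<le> G y" using Gpt y by blast
        finally show "ennreal ((cmod (Phi k x y))^2) \<le> G y" .
      qed
      have \<phi>m: "\<phi> \<in> borel_measurable M" and \<phi>i: "integrable M (\<lambda>y. (cmod (\<phi> y))^2)"
        using \<phi> unfolding in_L2_bdry_def M_def by auto
      have "cmod (single_layer D k \<phi> x) \<le> sqrt Q * sqrt (LINT y|M. (cmod (\<phi> y))^2)"
        unfolding single_layer_def M_def[symmetric] by (rule cs_step[OF Gm Gpt' GQ Q0 \<phi>m \<phi>i])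
      also have "\<dots> = sqrt Kf * (k powr (-1/2)) * sqrt (ln (1 + k * d)) * L2_norm_bdry D \<phi>"
      proof -
        have "sqrt Q = sqrt Kf * sqrt (ln (1 + k*d)) / sqrt k" unfolding Q_def by (simp add: real_sqrt_mult real_sqrt_divide)
        moreover have "k powr (-1/2) = 1 / sqrt k" using kp by (simp add: powr_minus_divide sqrt_def root_powr_inverse powr_divide)
        ultimately show ?thesis unfolding L2_norm_bdry_def M_def by simp
      qed
      also have "\<dots> \<le> C * (k powr (-1/2)) * sqrt (ln (1 + k * d)) * L2_norm_bdry D \<phi>"
        unfolding C_def L2_norm_bdry_def using lkd by (intro mult_right_mono) auto
      finally show ?thesis .
    qed
    show ?thesis using Cp main unfolding d_def F_def by blast
  qed
qed

end
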